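(* Let $\Omega\subset\mathbb{R}^d$ be open, $k\in\mathbb{N}\cup\{\infty\}$, $E$ a non-trivial locally convex Hausdorff space over $\mathbb{K}$, $\mathcal{FV}(\Omega)$ a dom-space such that the inclusion $I\colon\mathcal{FV}(\Omega)\to\mathcal{CW}^k(\Omega)$, $f\mapsto f$, is (well-defined and) continuous. If $\mathcal{FV}(\Omega)$ is barrelled, then for all $u\in\mathcal{FV}(\Omega)\varepsilon E$ we have $S(u)\in\mathcal{C}^k(\Omega,E)$ and $(\partial^\beta)^E S(u)(x)=u(\delta_x\circ(\partial^\beta)^{\mathbb{K}})$ for all $\beta\in\mathbb{N}_0^d$ with $|\beta|\le k$ and all $x\in\Omega$.
   Context: $\mathbb{K}\in\{\mathbb{R},\mathbb{C}\}$. For $f\colon\Omega\to E$, $(\partial^{e_n})^E f(x):=\lim_{h\to0}\frac{f(x+he_n)-f(x)}{h}$ in $E$; $f$ is $\mathcal{C}^1$ if these exist and are continuous; $f$ is $\mathcal{C}^k$ if it is $\mathcal{C}^1$ with all first partial derivatives $\mathcal{C}^{k-1}$ ($\mathcal{C}^0$ = continuous), $\mathcal{C}^\infty$ if $\mathcal{C}^k$ for all $k$; $(\partial^\beta)^E:=(\partial^{e_1})^{\beta_1}\cdots(\partial^{e_d})^{\beta_d}$, $|\beta|=\sum\beta_i$. $\mathcal{CW}^k(\Omega)$ is $\mathcal{C}^k(\Omega,\mathbb{K})$ with the topology of uniform convergence of all partial derivatives of order $\le k$ on compact subsets of $\Omega$. Framework: $J,M$ non-empty index sets, $(\omega_m)_{m\in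 M}$ non-empty sets, $\nu_{j,m}\colon\omega_m\to[0,\infty)$ such that for all $m$, $x\in\omega_m$ some $\nu_{j,m}(x)>0$; $\operatorname{AP}(\Omega)\subset\mathbb{K}^\Omega$ a linear subspace; $T_m\colon\operatorname{dom}T_m\to\mathbb{K}^{\omega_m}$ linear maps on linear subspaces of $\mathbb{K}^\Omega$; $\mathcal{FV}(\Omega):=\{f\in\operatorname{AP}(\Omega)\cap\bigcap_m\operatorname{dom}T_m: |f|_{j,m}:=\sup_{x\in\omega_m}|T_m(f)(x)|\nu_{j,m}(x)<\infty\ \forall j,m\}$ with these seminorms. It is a dom-space if it is Hausdorff, the seminorms are directed and every $\delta_x\colon f\mapsto f(x)$ belongs to $\mathcal{FV}(\Omega)'$. $\mathcal{FV}(\Omega)\varepsilon E$: continuous linear maps from $\mathcal{FV}(\Omega)'$ (topology of uniform convergence on absolutely convex compact sets) to $E$, with the topology of uniform convergence on equicontinuous sets; $S(u)(x):=u(\delta_x)$. $\delta_x\circ(\partial^\beta)^{\mathbb{K}}$ denotes $f\mapsto(\partial^\beta)^{\mathbb{K}}f(x)$ on $\mathcal{FV}(\Omega)$. *)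

theory Defs
  imports "HOL-Analysis.Analysis" "HOL-Library.Function_Algebras" "HOL-Library.Extended_Nat"
begin

text \<open>Scalars: a type of class real_normed_field (up to isometric isomorphism exactly
  the real or the complex numbers).  Points of Omega live in real^'n (d = CARD('n)).\<close>

definition ext_on :: "'v set \<Rightarrow> ('v \<Rightarrow> 'k::zero) \<Rightarrow> 'v \<Rightarrow> 'k" where
  "ext_on V \<phi> = (\<lambda>v. if v \<in> V then \<phi> v else 0)"

definition fscale :: "'k::times \<Rightarrow> ('a \<Rightarrow> 'k) \<Rightarrow> 'a \<Rightarrow> 'k" where
  "fscale c f = (\<lambda>x. c * f x)"

definition lin_subspace :: "('a \<Rightarrow> 'k::real_normed_field) set \<Rightarrow> bool" where
  "lin_subspace S \<longleftrightarrow> 0 \<in> S \<and> (\<forall>f\<in>S. \<forall>g\<in>S. f + g \<in> S) \<and> (\<forall>c. \<forall>f\<in>S. fscale c f \<in> S)"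

definition lin_on :: "('k \<Rightarrow> 'v \<Rightarrow> 'v) \<Rightarrow> ('k \<Rightarrow> 'w \<Rightarrow> 'w) \<Rightarrow> 'v::plus set \<Rightarrow> ('v \<Rightarrow> 'w::plus) \<Rightarrow> bool" where
  "lin_on sc1 sc2 V \<phi> \<longleftrightarrow> (\<forall>x\<in>V. \<forall>y\<in>V. \<phi> (x + y) = \<phi> x + \<phi> y) \<and> (\<forall>c. \<forall>x\<in>V. \<phi> (sc1 c x) = sc2 c (\<phi> x))"

definition cont_lin_sn :: "'i set \<Rightarrow> ('i \<Rightarrow> 'v \<Rightarrow> real) \<Rightarrow> ('l \<Rightarrow> 'w \<Rightarrow> real) \<Rightarrow> 'v set \<Rightarrow> ('v \<Rightarrow> 'w) \<Rightarrow> bool" where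
  "cont_lin_sn Idx P Q V \<phi> \<longleftrightarrow>
     (\<forall>l. \<exists>I C. finite I \<and> I \<subseteq> Idx \<and> (\<forall>v\<in>V. Q l (\<phi> v) \<le> C * (\<Sum>i\<in>I. P i v)))"

definition sn_topology :: "'v set \<Rightarrow> ('i \<Rightarrow> 'v::ab_group_add \<Rightarrow> real) \<Rightarrow> 'v topology" where
  "sn_topology V P = topology (\<lambda>U. U \<subseteq> V \<and>
     (\<forall>v\<in>U. \<exists>I \<epsilon>. finite I \<and> \<epsilon> > 0 \<and> {w\<in>V. \<forall>i\<in>I. P i (w - v) < \<epsilon>} \<subseteq> U))"

definition is_seminorm :: "('k::real_normed_field \<Rightarrow> 'e \<Rightarrow> 'e) \<Rightarrow> ('e::ab_group_add \<Rightarrow> real) \<Rightarrow> bool" where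
  "is_seminorm sc p \<longleftrightarrow> (\<forall>x y. p (x + y) \<le> p x + p y) \<and> (\<forall>c x. p (sc c x) = norm c * p x)"

definition lc_hausdorff :: "('k::real_normed_field \<Rightarrow> 'e \<Rightarrow> 'e) \<Rightarrow> ('l \<Rightarrow> 'e::ab_group_add \<Rightarrow> real) \<Rightarrow> bool" where
  "lc_hausdorff sc q \<longleftrightarrow> vector_space sc \<and> (\<forall>l. is_seminorm sc (q l)) \<and> (\<forall>e. (\<forall>l. q l e = 0) \<longrightarrow> e = 0)"

definition directed_sn :: "'v set \<Rightarrow> ('i \<Rightarrow> 'v \<Rightarrow> real) \<Rightarrow> bool" where
  "directed_sn V P \<longleftrightarrow> (\<forall>i1 i2. \<exists>i3 C. \<forall>v\<in>V. max (P i1 v) (P i2 v) \<le> C * P i3 v)"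

text \<open>Topological dual (functionals are represented extensionally: zero outside V).\<close>
definition dual_sp :: "('k::real_normed_field \<Rightarrow> 'v \<Rightarrow> 'v) \<Rightarrow> 'v::ab_group_add set \<Rightarrow> ('i \<Rightarrow> 'v \<Rightarrow> real) \<Rightarrow> ('v \<Rightarrow> 'k) set" where
  "dual_sp sc V P = {\<phi>. (\<forall>v. v \<notin> V \<longrightarrow> \<phi> v = 0) \<and> lin_on sc (*) V \<phi> \<and> cont_lin_sn UNIV P (\<lambda>_::unit. norm) V \<phi>}"

definition abs_convex :: "('k::real_normed_field \<Rightarrow> 'v \<Rightarrow> 'v) \<Rightarrow> 'v::plus set \<Rightarrow> bool" where
  "abs_convex sc K \<longleftrightarrow> (\<forall>x\<in>K. \<forall>y\<in>K. \<forall>a b. norm a + norm b \<le> 1 \<longrightarrow> sc a x + sc b y \<in> K)"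

definition acx_compacts :: "('k::real_normed_field \<Rightarrow> 'v \<Rightarrow> 'v) \<Rightarrow> 'v::ab_group_add set \<Rightarrow> ('i \<Rightarrow> 'v \<Rightarrow> real) \<Rightarrow> 'v set set" where
  "acx_compacts sc V P = {K. K \<noteq> {} \<and> K \<subseteq> V \<and> abs_convex sc K \<and> compactin (sn_topology V P) K}"

definition dual_sn :: "'v set \<Rightarrow> ('v \<Rightarrow> 'k::real_normed_field) \<Rightarrow> real" where
  "dual_sn K \<phi> = (SUP v\<in>K. norm (\<phi> v))"

text \<open>The epsilon-product (as a set): continuous linear maps from the dual
  (with the topology of uniform convergence on absolutely convex compact sets) to E.\<close>
definition eps_prod :: "('k::real_normed_field \<Rightarrow> 'v \<Rightarrow> 'v) \<Rightarrow> 'v::ab_group_add set \<Rightarrow> ('i \<Rightarrow> 'v \<Rightarrow> real)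
     \<Rightarrow> ('k \<Rightarrow> 'e \<Rightarrow> 'e) \<Rightarrow> ('l \<Rightarrow> 'e::ab_group_add \<Rightarrow> real) \<Rightarrow> (('v \<Rightarrow> 'k) \<Rightarrow> 'e) set" where
  "eps_prod sc V P scE qE = {u. lin_on fscale scE (dual_sp sc V P) u \<and>
      cont_lin_sn (acx_compacts sc V P) dual_sn qE (dual_sp sc V P) u}"

definition barrelled :: "('k::real_normed_field \<Rightarrow> 'v \<Rightarrow> 'v) \<Rightarrow> 'v::ab_group_add set \<Rightarrow> ('i \<Rightarrow> 'v \<Rightarrow> real) \<Rightarrow> bool" where
  "barrelled sc V P \<longleftrightarrow> (\<forall>B. B \<subseteq> V \<and> closedin (sn_topology V P) B \<and> abs_convex sc B \<and>
       (\<forall>v\<in>V. \<exists>r>0. \<forall>c. norm c \<le> r \<longrightarrow> sc c v \<in> B)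
     \<longrightarrow> (\<exists>U. openin (sn_topology V P) U \<and> 0 \<in> U \<and> U \<subseteq> B))"

definition has_pd :: "('k::real_normed_field \<Rightarrow> 'e \<Rightarrow> 'e) \<Rightarrow> ('l \<Rightarrow> 'e::ab_group_add \<Rightarrow> real) \<Rightarrow> 'n::finite
     \<Rightarrow> (real^'n \<Rightarrow> 'e) \<Rightarrow> real^'n \<Rightarrow> 'e \<Rightarrow> bool" where
  "has_pd sc q n f x v \<longleftrightarrow> (\<forall>l \<epsilon>. \<epsilon> > 0 \<longrightarrow> (\<exists>\<delta>>0. \<forall>h::real. h \<noteq> 0 \<and> \<bar>h\<bar> < \<delta> \<longrightarrow>
       q l (sc (of_real (inverse h)) (f (x + h *\<^sub>R axis n 1) - f x) - v) < \<epsilon>))"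

definition pd :: "('k::real_normed_field \<Rightarrow> 'e \<Rightarrow> 'e) \<Rightarrow> ('l \<Rightarrow> 'e::ab_group_add \<Rightarrow> real) \<Rightarrow> 'n::finite
     \<Rightarrow> (real^'n \<Rightarrow> 'e) \<Rightarrow> real^'n \<Rightarrow> 'e" where
  "pd sc q n f = (\<lambda>x. THE v. has_pd sc q n f x v)"

definition pd_multi :: "('k::real_normed_field \<Rightarrow> 'e \<Rightarrow> 'e) \<Rightarrow> ('l \<Rightarrow> 'e::ab_group_add \<Rightarrow> real) \<Rightarrow> ('n::{finite,linorder} \<Rightarrow> nat)
     \<Rightarrow> ((real,'n) vec \<Rightarrow> 'e) \<Rightarrow> (real,'n) vec \<Rightarrow> 'e" where
  "pd_multi sc q \<beta> f = foldr (\<lambda>n g. (pd sc q n ^^ \<beta> n) g) (sorted_list_of_set UNIV) f"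

definition cont_on_sn :: "('l \<Rightarrow> 'e::ab_group_add \<Rightarrow> real) \<Rightarrow> (real^'n::finite) set \<Rightarrow> (real^'n \<Rightarrow> 'e) \<Rightarrow> bool" where
  "cont_on_sn q \<Omega> f \<longleftrightarrow> (\<forall>x\<in>\<Omega>. \<forall>l \<epsilon>. \<epsilon> > 0 \<longrightarrow> (\<exists>\<delta>>0. \<forall>y\<in>\<Omega>. dist y x < \<delta> \<longrightarrow> q l (f y - f x) < \<epsilon>))"

definition C1_sn :: "('k::real_normed_field \<Rightarrow> 'e \<Rightarrow> 'e) \<Rightarrow> ('l \<Rightarrow> 'e::ab_group_add \<Rightarrow> real) \<Rightarrow> (real^'n::finite) set
     \<Rightarrow> (real^'n \<Rightarrow> 'e) \<Rightarrow> bool" where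
  "C1_sn sc q \<Omega> f \<longleftrightarrow> (\<forall>n. \<forall>x\<in>\<Omega>. \<exists>v. has_pd sc q n f x v) \<and> (\<forall>n. cont_on_sn q \<Omega> (pd sc q n f))"

fun Ck_sn :: "('k::real_normed_field \<Rightarrow> 'e \<Rightarrow> 'e) \<Rightarrow> ('l \<Rightarrow> 'e::ab_group_add \<Rightarrow> real) \<Rightarrow> (real^'n::finite) set
     \<Rightarrow> nat \<Rightarrow> (real^'n \<Rightarrow> 'e) \<Rightarrow> bool" where
  "Ck_sn sc q \<Omega> 0 f = cont_on_sn q \<Omega> f"
| "Ck_sn sc q \<Omega> (Suc k) f = (C1_sn sc q \<Omega> f \<and> (\<forall>n. Ck_sn sc q \<Omega> k (pd sc q n f)))"

definition Ck_enat :: "('k::real_normed_field \<Rightarrow> 'e \<Rightarrow> 'e) \<Rightarrow> ('l \<Rightarrow> 'e::ab_group_add \<Rightarrow> real) \<Rightarrow> (real^'n::finite) set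
     \<Rightarrow> enat \<Rightarrow> (real^'n \<Rightarrow> 'e) \<Rightarrow> bool" where
  "Ck_enat sc q \<Omega> k f = (case k of enat m \<Rightarrow> Ck_sn sc q \<Omega> m f | \<infinity> \<Rightarrow> (\<forall>m. Ck_sn sc q \<Omega> m f))"

definition FV_set :: "(real^'n::finite \<Rightarrow> 'k::real_normed_field) set \<Rightarrow> ('m \<Rightarrow> (real^'n \<Rightarrow> 'k) set)
     \<Rightarrow> ('m \<Rightarrow> (real^'n \<Rightarrow> 'k) \<Rightarrow> 'w \<Rightarrow> 'k) \<Rightarrow> ('m \<Rightarrow> 'w set) \<Rightarrow> ('j \<Rightarrow> 'm \<Rightarrow> 'w \<Rightarrow> real)
     \<Rightarrow> (real^'n \<Rightarrow> 'k) set" where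
  "FV_set AP D T \<omega> \<nu> = {f. f \<in> AP \<and> (\<forall>m. f \<in> D m) \<and>
      (\<forall>j m. bdd_above ((\<lambda>x. norm (T m f x) * \<nu> j m x) ` \<omega> m))}"

definition FV_sn :: "('m \<Rightarrow> (real^'n::finite \<Rightarrow> 'k::real_normed_field) \<Rightarrow> 'w \<Rightarrow> 'k) \<Rightarrow> ('m \<Rightarrow> 'w set)
     \<Rightarrow> ('j \<Rightarrow> 'm \<Rightarrow> 'w \<Rightarrow> real) \<Rightarrow> 'j \<times> 'm \<Rightarrow> (real^'n \<Rightarrow> 'k) \<Rightarrow> real" where
  "FV_sn T \<omega> \<nu> = (\<lambda>(j, m) f. SUP x\<in>\<omega> m. norm (T m f x) * \<nu> j m x)"

end

theory Submission imports Defs begin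

lemma fscale_apply[simp]: "fscale c f x = c * f x" by (simp add: fscale_def)

lemma istop_sn: fixes P :: "'i \<Rightarrow> 'a::ab_group_add \<Rightarrow> real" shows "istopology (\<lambda>U. U \<subseteq> V \<and>
     (\<forall>v\<in>U. \<exists>I \<epsilon>. finite I \<and> \<epsilon> > 0 \<and> {w\<in>V. \<forall>i\<in>I. P i (w - v) < \<epsilon>} \<subseteq> U))"
  unfolding istopology_def
proof (rule conjI; intro allI impI)
  fix S T assume S: "S \<subseteq> V \<and> (\<forall>v\<in>S. \<exists>I \<epsilon>. finite I \<and> \<epsilon> > 0 \<and> {w\<in>V. \<forall>i\<in>I. P i (w - v) < \<epsilon>} \<subseteq> S)"
    and T: "T \<subseteq> V \<and> (\<forall>v\<in>T. \<exists>I \<epsilon>. finite I \<and> \<epsilon> > 0 \<and> {w\<in>V. \<forall>i\<in>I. P i (w - v) < \<epsilon>} \<subseteq> T)"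
  show "S \<inter> T \<subseteq> V \<and> (\<forall>v\<in>S \<inter> T. \<exists>I \<epsilon>. finite I \<and> \<epsilon> > 0 \<and> {w\<in>V. \<forall>i\<in>I. P i (w - v) < \<epsilon>} \<subseteq> S \<inter> T)"
  proof (rule conjI; (intro ballI)?)
    show "S \<inter> T \<subseteq> V" using S by auto
    fix v assume v: "v \<in> S \<inter> T"
    obtain I1 e1 where 1: "finite I1" "e1 > 0" "{w\<in>V. \<forall>i\<in>I1. P i (w - v) < e1} \<subseteq> S"
      using S[THEN conjunct2, rule_format, of v] v by auto
    obtain I2 e2 where 2: "finite I2" "e2 > 0" "{w\<in>V. \<forall>i\<in>I2. P i (w - v) < e2} \<subseteq> T"
      using T[THEN conjunct2, rule_format, of v] v by auto
    have a: "{w\<in>V. \<forall>i\<in>I1 \<union> I2. P i (w - v) < min e1 e2} \<subseteq> {w\<in>V. \<forall>i\<in>I1. P i (w - v) < e1}" by auto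
    have b: "{w\<in>V. \<forall>i\<in>I1 \<union> I2. P i (w - v) < min e1 e2} \<subseteq> {w\<in>V. \<forall>i\<in>I2. P i (w - v) < e2}" by auto
    have c: "{w\<in>V. \<forall>i\<in>I1 \<union> I2. P i (w - v) < min e1 e2} \<subseteq> S \<inter> T"
      using a b 1(3) 2(3) by (meson Int_greatest order_trans)
    have "finite (I1 \<union> I2)" "min e1 e2 > 0" using 1 2 by auto
    with c show "\<exists>I \<epsilon>. finite I \<and> \<epsilon> > 0 \<and> {w\<in>V. \<forall>i\<in>I. P i (w - v) < \<epsilon>} \<subseteq> S \<inter> T" by blast
  qed
next
  fix K :: "'a set set" assume K: "\<forall>K\<in>K. K \<subseteq> V \<and> (\<forall>v\<in>K. \<exists>I \<epsilon>. finite I \<and> \<epsilon> > 0 \<and> {w\<in>V. \<forall>i\<in>I. P i (w - v) < \<epsilon>} \<subseteq> K)"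
  show "\<Union>K \<subseteq> V \<and> (\<forall>v\<in>\<Union>K. \<exists>I \<epsilon>. finite I \<and> \<epsilon> > 0 \<and> {w\<in>V. \<forall>i\<in>I. P i (w - v) < \<epsilon>} \<subseteq> \<Union>K)"
  proof (rule conjI; (intro ballI)?)
    show "\<Union>K \<subseteq> V" using K by (simp add: Sup_le_iff)
    fix v assume "v \<in> \<Union>K"
    then obtain X where X: "X \<in> K" "v \<in> X" by blast
    obtain I \<epsilon> where "finite I" "\<epsilon> > 0" "{w\<in>V. \<forall>i\<in>I. P i (w - v) < \<epsilon>} \<subseteq> X"
      using K[rule_format, OF X(1), THEN conjunct2, rule_format, OF X(2)] by auto
    moreover have "X \<subseteq> \<Union>K" using X by auto
    ultimately show "\<exists>I \<epsilon>. finite I \<and> \<epsilon> > 0 \<and> {w\<in>V. \<forall>i\<in>I. P i (w - v) < \<epsilon>} \<subseteq> \<Union>K"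
      by (meson order_trans)
  qed
qed


lemma arith_l1: fixes C n a :: real assumes "C \<ge> 0" "n \<ge> 0" "a > 0"
  shows "C * (n * (a / ((C + 1) * (n + 1)))) < a"
proof -
  have den: "(C + 1) * (n + 1) > 0" using assms by simp
  have "C * n < (C + 1) * (n + 1)" using assms by (simp add: algebra_simps)
  then have "C * n * a < (C + 1) * (n + 1) * a" using assms by simp
  then show ?thesis using den by (simp add: field_simps)
qed
lemma arith_l2: fixes C n a :: real assumes "C \<ge> 0" "n \<ge> 0" "a > 0"
  shows "a / ((C + 1) * (n + 1)) > 0" using assms by simp

lemma arith_l3: fixes n x :: real assumes "n \<ge> 0" "x > 0"
  shows "n * (x / (n + 1)) < x"
proof -
  have "n * x < (n + 1) * x" using assms by simp
  then show ?thesis using assms by (simp add: field_simps)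
qed
lemma arith_l4: fixes C r :: real assumes "C \<ge> 0" "r > 0"
  shows "C * (r / (4 * (C + 1))) \<le> r / 4"
proof -
  have "C * r \<le> (C + 1) * r" using assms by simp
  then show ?thesis using assms by (simp add: field_simps)
qed
lemma arith_l5: fixes C r :: real assumes "C \<ge> 0" "r > 0"
  shows "r / (4 * (C + 1)) > 0" using assms by simp
lemma arith_l6: fixes n x :: real assumes "n \<ge> 0" "x > 0"
  shows "x / (n + 1) > 0" using assms by simp

lemma openin_sn: "openin (sn_topology V P) U \<longleftrightarrow> U \<subseteq> V \<and>
     (\<forall>v\<in>U. \<exists>I \<epsilon>. finite I \<and> \<epsilon> > 0 \<and> {w\<in>V. \<forall>i\<in>I. P i (w - v) < \<epsilon>} \<subseteq> U)"
  unfolding sn_topology_def using istop_sn[of V P] by simp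

lemma topspace_sn: "topspace (sn_topology V P) = V"
proof -
  have "openin (sn_topology V P) V" unfolding openin_sn
    by (auto intro!: exI[of _ "{}"] exI[of _ "1::real"])
  moreover have "\<And>U. openin (sn_topology V P) U \<Longrightarrow> U \<subseteq> V" unfolding openin_sn by auto
  ultimately show ?thesis unfolding topspace_def by blast
qed

lemma minus_fscale: "(f::'a \<Rightarrow> 'k::real_normed_field) - g = f + fscale (-1) g"
  by (simp add: fun_eq_iff)

lemma lsub_0: "lin_subspace S \<Longrightarrow> 0 \<in> S" by (simp add: lin_subspace_def)
lemma lsub_add: "lin_subspace S \<Longrightarrow> f \<in> S \<Longrightarrow> g \<in> S \<Longrightarrow> f + g \<in> S" by (simp add: lin_subspace_def)
lemma lsub_scale: "lin_subspace S \<Longrightarrow> f \<in> S \<Longrightarrow> fscale c f \<in> S" by (simp add: lin_subspace_def)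
lemma lsub_diff: "lin_subspace S \<Longrightarrow> f \<in> S \<Longrightarrow> g \<in> S \<Longrightarrow> f - g \<in> S"
  unfolding minus_fscale by (intro lsub_add lsub_scale)

lemma dual_out: "\<phi> \<in> dual_sp fscale V P \<Longrightarrow> v \<notin> V \<Longrightarrow> \<phi> v = 0"
  by (simp add: dual_sp_def)
lemma dual_add: "\<phi> \<in> dual_sp fscale V P \<Longrightarrow> f \<in> V \<Longrightarrow> g \<in> V \<Longrightarrow> \<phi> (f + g) = \<phi> f + \<phi> g"
  by (simp add: dual_sp_def lin_on_def)
lemma dual_scale: "\<phi> \<in> dual_sp fscale V P \<Longrightarrow> f \<in> V \<Longrightarrow> \<phi> (fscale c f) = c * \<phi> f"
  by (simp add: dual_sp_def lin_on_def)
lemma dual_diff: "lin_subspace V \<Longrightarrow> \<phi> \<in> dual_sp fscale V P \<Longrightarrow> f \<in> V \<Longrightarrow> g \<in> V \<Longrightarrow> \<phi> (f - g) = \<phi> f - \<phi> g"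
  unfolding minus_fscale by (simp add: dual_add dual_scale lsub_scale)
lemma dual_bound: "\<phi> \<in> dual_sp fscale V P \<Longrightarrow> \<exists>I C. finite I \<and> (\<forall>v\<in>V. norm (\<phi> v) \<le> C * (\<Sum>i\<in>I. P i v))"
  by (auto simp: dual_sp_def cont_lin_sn_def)

locale bspace =
  fixes V :: "('a \<Rightarrow> 'k::real_normed_field) set" and P :: "'i \<Rightarrow> ('a \<Rightarrow> 'k) \<Rightarrow> real"
  assumes Vsub: "lin_subspace V"
    and Pnn: "\<forall>i. \<forall>f\<in>V. 0 \<le> P i f"
    and Padd: "\<forall>i. \<forall>f\<in>V. \<forall>g\<in>V. P i (f + g) \<le> P i f + P i g"
    and Pscale: "\<forall>i c. \<forall>f\<in>V. P i (fscale c f) \<le> norm c * P i f"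
    and barr: "barrelled fscale V P"
begin

lemma P_zero: "P i 0 = 0"
proof -
  have "(0::'a\<Rightarrow>'k) = fscale 0 0" by (simp add: fun_eq_iff)
  then have "P i 0 \<le> 0" using Pscale lsub_0[OF Vsub] by (metis mult_zero_left norm_zero)
  then show ?thesis using Pnn lsub_0[OF Vsub] by (meson antisym)
qed

lemma P_sum_nn: "f \<in> V \<Longrightarrow> 0 \<le> (\<Sum>i\<in>I. P i f)"
  using Pnn by (simp add: sum_nonneg)

lemma P_sym: "f \<in> V \<Longrightarrow> g \<in> V \<Longrightarrow> P i (f - g) \<le> P i (g - f)"
proof -
  assume f: "f \<in> V" and g: "g \<in> V"
  have "f - g = fscale (-1) (g - f)" by (simp add: fun_eq_iff)
  then show ?thesis using Pscale lsub_diff[OF Vsub g f] by (metis mult_1 norm_minus_cancel norm_one)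
qed

lemma P_tri: "f \<in> V \<Longrightarrow> g \<in> V \<Longrightarrow> h \<in> V \<Longrightarrow> P i (f - h) \<le> P i (f - g) + P i (g - h)"
proof -
  assume V: "f \<in> V" "g \<in> V" "h \<in> V"
  have "f - h = (f - g) + (g - h)" by simp
  then show ?thesis using Padd lsub_diff[OF Vsub] V by metis
qed

lemma dual_bound_nn: "\<phi> \<in> dual_sp fscale V P \<Longrightarrow> \<exists>I C. finite I \<and> C \<ge> 0 \<and> (\<forall>v\<in>V. norm (\<phi> v) \<le> C * (\<Sum>i\<in>I. P i v))"
proof -
  assume d: "\<phi> \<in> dual_sp fscale V P"
  obtain I C where IC: "finite I" "\<forall>v\<in>V. norm (\<phi> v) \<le> C * (\<Sum>i\<in>I. P i v)" using dual_bound[OF d] by blast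
  have "\<forall>v\<in>V. norm (\<phi> v) \<le> max C 0 * (\<Sum>i\<in>I. P i v)"
  proof
    fix v assume v: "v \<in> V"
    have "C * (\<Sum>i\<in>I. P i v) \<le> max C 0 * (\<Sum>i\<in>I. P i v)"
      using P_sum_nn[OF v] by (intro mult_right_mono) auto
    then show "norm (\<phi> v) \<le> max C 0 * (\<Sum>i\<in>I. P i v)" using IC v by (meson order_trans)
  qed
  then show ?thesis using IC(1) by (intro exI[of _ I] exI[of _ "max C 0"]) auto
qed

lemma zero_dual: "(0::('a\<Rightarrow>'k)\<Rightarrow>'k) \<in> dual_sp fscale V P"
  by (auto simp: dual_sp_def lin_on_def cont_lin_sn_def intro!: exI[of _ "{}"])

lemma dual_closed_add:
  assumes a: "a \<in> dual_sp fscale V P" and b: "b \<in> dual_sp fscale V P"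
  shows "a + b \<in> dual_sp fscale V P"
proof -
  obtain I1 C1 where 1: "finite I1" "C1 \<ge> 0" "\<forall>v\<in>V. norm (a v) \<le> C1 * (\<Sum>i\<in>I1. P i v)" using dual_bound_nn[OF a] by blast
  obtain I2 C2 where 2: "finite I2" "C2 \<ge> 0" "\<forall>v\<in>V. norm (b v) \<le> C2 * (\<Sum>i\<in>I2. P i v)" using dual_bound_nn[OF b] by blast
  have "\<forall>v\<in>V. norm ((a + b) v) \<le> (C1 + C2) * (\<Sum>i\<in>I1 \<union> I2. P i v)"
  proof
    fix v assume v: "v \<in> V"
    have s1: "(\<Sum>i\<in>I1. P i v) \<le> (\<Sum>i\<in>I1 \<union> I2. P i v)" using 1 2 Pnn v by (intro sum_mono2) auto
    have s2: "(\<Sum>i\<in>I2. P i v) \<le> (\<Sum>i\<in>I1 \<union> I2. P i v)" using 1 2 Pnn v by (intro sum_mono2) auto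
    have "norm ((a + b) v) \<le> norm (a v) + norm (b v)" by (simp add: norm_triangle_ineq)
    also have "\<dots> \<le> C1 * (\<Sum>i\<in>I1. P i v) + C2 * (\<Sum>i\<in>I2. P i v)" using 1 2 v by (meson add_mono)
    also have "\<dots> \<le> C1 * (\<Sum>i\<in>I1 \<union> I2. P i v) + C2 * (\<Sum>i\<in>I1 \<union> I2. P i v)"
      using s1 s2 1(2) 2(2) by (intro add_mono mult_left_mono) auto
    finally show "norm ((a + b) v) \<le> (C1 + C2) * (\<Sum>i\<in>I1 \<union> I2. P i v)" by (simp add: distrib_right)
  qed
  then show ?thesis using a b 1 2
    by (auto simp: dual_sp_def lin_on_def cont_lin_sn_def algebra_simps intro!: exI[of _ "I1 \<union> I2"] exI[of _ "C1 + C2"])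
qed

lemma dual_closed_scale:
  assumes a: "a \<in> dual_sp fscale V P"
  shows "fscale c a \<in> dual_sp fscale V P"
proof -
  obtain I C where 1: "finite I" "C \<ge> 0" "\<forall>v\<in>V. norm (a v) \<le> C * (\<Sum>i\<in>I. P i v)" using dual_bound_nn[OF a] by blast
  have "\<forall>v\<in>V. norm (fscale c a v) \<le> (norm c * C) * (\<Sum>i\<in>I. P i v)"
    using 1 by (auto simp: norm_mult mult.assoc intro: mult_left_mono)
  then show ?thesis using a 1
    by (auto simp: dual_sp_def lin_on_def cont_lin_sn_def algebra_simps intro!: exI[of _ "I"] exI[of _ "norm c * C"])
qed

lemma dual_closed_diff:
  "a \<in> dual_sp fscale V P \<Longrightarrow> b \<in> dual_sp fscale V P \<Longrightarrow> a - b \<in> dual_sp fscale V P"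
  unfolding minus_fscale by (intro dual_closed_add dual_closed_scale)


lemma equicont:
  assumes H: "H \<subseteq> dual_sp fscale V P" and pb: "\<forall>f\<in>V. \<exists>M. \<forall>\<phi>\<in>H. norm (\<phi> f) \<le> M"
  shows "\<exists>I C. finite I \<and> C \<ge> 0 \<and> (\<forall>\<phi>\<in>H. \<forall>f\<in>V. norm (\<phi> f) \<le> C * (\<Sum>i\<in>I. P i f))"
proof -
  define B where "B = {f\<in>V. \<forall>\<phi>\<in>H. norm (\<phi> f) \<le> 1}"
  have BV: "B \<subseteq> V" by (auto simp: B_def)
  have opn: "openin (sn_topology V P) (V - B)" unfolding openin_sn
  proof (rule conjI)
    show "V - B \<subseteq> V" by blast
    show "\<forall>v\<in>V-B. \<exists>I \<epsilon>. finite I \<and> \<epsilon> > 0 \<and> {w\<in>V. \<forall>i\<in>I. P i (w - v) < \<epsilon>} \<subseteq> V - B"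
    proof
      fix v assume v: "v \<in> V - B"
      then obtain \<phi> where \<phi>: "\<phi> \<in> H" "norm (\<phi> v) > 1" by (auto simp: B_def not_le)
      from \<phi> H have \<phi>d: "\<phi> \<in> dual_sp fscale V P" by auto
      obtain I C where IC: "finite I" "C \<ge> 0" "\<forall>w\<in>V. norm (\<phi> w) \<le> C * (\<Sum>i\<in>I. P i w)"
        using dual_bound_nn[OF \<phi>d] by blast
      define a where "a = norm (\<phi> v) - 1"
      define n where "n = real (card I)"
      have apos: "a > 0" using \<phi> by (simp add: a_def)
      have nnn: "n \<ge> 0" by (simp add: n_def)
      define \<epsilon> where "\<epsilon> = a / ((C + 1) * (n + 1))"
      have \<epsilon>pos: "\<epsilon> > 0" unfolding \<epsilon>_def using IC(2) nnn apos by (rule arith_l2)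
      have key: "C * (n * \<epsilon>) < a" unfolding \<epsilon>_def using IC(2) nnn apos by (rule arith_l1)
      have "{w\<in>V. \<forall>i\<in>I. P i (w - v) < \<epsilon>} \<subseteq> V - B"
      proof
        fix w assume w: "w \<in> {w\<in>V. \<forall>i\<in>I. P i (w - v) < \<epsilon>}"
        have wV: "w \<in> V" using w by simp
        have wI: "\<forall>i\<in>I. P i (w - v) < \<epsilon>" using w by simp
        have vV: "v \<in> V" using v by simp
        have dV: "w - v \<in> V" using lsub_diff[OF Vsub wV vV] .
        have "(\<Sum>i\<in>I. P i (w - v)) \<le> of_nat (card I) * \<epsilon>"
          by (rule sum_bounded_above) (use wI in auto)
        then have "(\<Sum>i\<in>I. P i (w - v)) \<le> n * \<epsilon>" by (simp add: n_def)
        then have "C * (\<Sum>i\<in>I. P i (w - v)) \<le> C * (n * \<epsilon>)" using IC(2) by (rule mult_left_mono)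
        moreover have "norm (\<phi> (w - v)) \<le> C * (\<Sum>i\<in>I. P i (w - v))" using IC(3) dV by blast
        ultimately have "norm (\<phi> (w - v)) < a" using key by linarith
        then have "norm (\<phi> w - \<phi> v) < a" using dual_diff[OF Vsub \<phi>d wV vV] by simp
        moreover have "norm (\<phi> v) \<le> norm (\<phi> w) + norm (\<phi> w - \<phi> v)"
          using norm_triangle_sub[of "\<phi> v" "\<phi> w"] norm_minus_commute[of "\<phi> v" "\<phi> w"] by linarith
        ultimately have "norm (\<phi> w) > 1" unfolding a_def by linarith
        then have "\<not> norm (\<phi> w) \<le> 1" by simp
        then show "w \<in> V - B" using wV \<phi>(1) unfolding B_def by blast
      qed
      then show "\<exists>I \<epsilon>. finite I \<and> \<epsilon> > 0 \<and> {w\<in>V. \<forall>i\<in>I. P i (w - v) < \<epsilon>} \<subseteq> V - B"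
        using IC(1) \<epsilon>pos by blast
    qed
  qed
  have clo: "closedin (sn_topology V P) B"
    unfolding closedin_def topspace_sn using BV opn by simp
  have acx: "abs_convex fscale B"
    unfolding abs_convex_def
  proof (intro ballI allI impI)
    fix x y and a b :: 'k assume x: "x \<in> B" and y: "y \<in> B" and ab: "norm a + norm b \<le> 1"
    have xV: "x \<in> V" and yV: "y \<in> V" using x y by (auto simp: B_def)
    have inV: "fscale a x + fscale b y \<in> V" using xV yV Vsub by (simp add: lsub_add lsub_scale)
    have "\<forall>\<phi>\<in>H. norm (\<phi> (fscale a x + fscale b y)) \<le> 1"
    proof
      fix \<phi> assume \<phi>: "\<phi> \<in> H"
      then have \<phi>d: "\<phi> \<in> dual_sp fscale V P" using H by auto
      have e: "\<phi> (fscale a x + fscale b y) = a * \<phi> x + b * \<phi> y"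
        using xV yV Vsub \<phi>d by (simp add: dual_add dual_scale lsub_scale)
      have "norm (a * \<phi> x + b * \<phi> y) \<le> norm a * norm (\<phi> x) + norm b * norm (\<phi> y)"
        by (metis norm_mult norm_triangle_ineq)
      also have "\<dots> \<le> norm a * 1 + norm b * 1"
        using x y \<phi> by (intro add_mono mult_left_mono) (auto simp: B_def)
      finally show "norm (\<phi> (fscale a x + fscale b y)) \<le> 1" using e ab by simp
    qed
    then show "fscale a x + fscale b y \<in> B" using inV by (simp add: B_def)
  qed
  have absorb: "\<forall>v\<in>V. \<exists>r>0. \<forall>c. norm c \<le> r \<longrightarrow> fscale c v \<in> B"
  proof
    fix v assume v: "v \<in> V"
    obtain M where M: "\<forall>\<phi>\<in>H. norm (\<phi> v) \<le> M" using pb v by blast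
    define r where "r = 1 / (\<bar>M\<bar> + 1)"
    have rpos: "r > 0" by (simp add: r_def add_pos_nonneg)
    have "\<forall>c. norm c \<le> r \<longrightarrow> fscale c v \<in> B"
    proof (intro allI impI)
      fix c :: 'k assume c: "norm c \<le> r"
      have "\<forall>\<phi>\<in>H. norm (\<phi> (fscale c v)) \<le> 1"
      proof
        fix \<phi> assume \<phi>: "\<phi> \<in> H"
        then have \<phi>d: "\<phi> \<in> dual_sp fscale V P" using H by auto
        have "norm (\<phi> (fscale c v)) = norm c * norm (\<phi> v)" using dual_scale[OF \<phi>d v] by (simp add: norm_mult)
        also have "\<dots> \<le> r * \<bar>M\<bar>" using c M \<phi> rpos by (intro mult_mono) auto
        also have "\<dots> \<le> 1" by (simp add: r_def field_simps)
        finally show "norm (\<phi> (fscale c v)) \<le> 1" .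
      qed
      then show "fscale c v \<in> B" using v Vsub by (simp add: B_def lsub_scale)
    qed
    then show "\<exists>r>0. \<forall>c. norm c \<le> r \<longrightarrow> fscale c v \<in> B" using rpos by blast
  qed
  obtain U where U: "openin (sn_topology V P) U" "0 \<in> U" "U \<subseteq> B"
  proof -
    have "B \<subseteq> V \<and> closedin (sn_topology V P) B \<and> abs_convex fscale B \<and>
       (\<forall>v\<in>V. \<exists>r>0. \<forall>c. norm c \<le> r \<longrightarrow> fscale c v \<in> B)" using BV clo acx absorb by simp
    then have "\<exists>U. openin (sn_topology V P) U \<and> 0 \<in> U \<and> U \<subseteq> B"
      using barr unfolding barrelled_def by blast
    then show ?thesis using that by blast
  qed
  obtain I \<epsilon> where I: "finite I" "\<epsilon> > 0" "{w\<in>V. \<forall>i\<in>I. P i (w - 0) < \<epsilon>} \<subseteq> U"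
    using U(1) U(2) unfolding openin_sn by blast
  have inB: "\<And>w. w \<in> V \<Longrightarrow> (\<forall>i\<in>I. P i w < \<epsilon>) \<Longrightarrow> w \<in> B" using I(3) U(3) by auto
  have "\<forall>\<phi>\<in>H. \<forall>f\<in>V. norm (\<phi> f) \<le> (2 / \<epsilon>) * (\<Sum>i\<in>I. P i f)"
  proof (intro ballI)
    fix \<phi> f assume \<phi>: "\<phi> \<in> H" and f: "f \<in> V"
    then have \<phi>d: "\<phi> \<in> dual_sp fscale V P" using H by auto
    define s where "s = (\<Sum>i\<in>I. P i f)"
    have snn: "s \<ge> 0" using P_sum_nn[OF f] by (simp add: s_def)
    have Ple: "\<And>i. i \<in> I \<Longrightarrow> P i f \<le> s"
      unfolding s_def using I(1) Pnn f by (intro member_le_sum) auto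
    have scl: "\<And>t::real. t > 0 \<Longrightarrow> (\<forall>i\<in>I. t * P i f < \<epsilon>) \<Longrightarrow> t * norm (\<phi> f) \<le> 1"
    proof -
      fix t :: real assume t: "t > 0" "\<forall>i\<in>I. t * P i f < \<epsilon>"
      have tV: "fscale (of_real t) f \<in> V" using Vsub f by (simp add: lsub_scale)
      have "\<forall>i\<in>I. P i (fscale (of_real t) f) < \<epsilon>"
      proof
        fix i assume i: "i \<in> I"
        have "P i (fscale (of_real t) f) \<le> norm (of_real t :: 'k) * P i f" using Pscale f by blast
        also have "\<dots> = t * P i f" using t by simp
        finally have "P i (fscale (of_real t) f) \<le> t * P i f" .
        moreover have "t * P i f < \<epsilon>" using t(2) i by blast
        ultimately show "P i (fscale (of_real t) f) < \<epsilon>" by linarith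
      qed
      then have "fscale (of_real t) f \<in> B" using inB tV by blast
      then have "norm (\<phi> (fscale (of_real t) f)) \<le> 1" using \<phi> by (simp add: B_def)
      then show "t * norm (\<phi> f) \<le> 1" using dual_scale[OF \<phi>d f] t by (simp add: norm_mult)
    qed
    show "norm (\<phi> f) \<le> (2 / \<epsilon>) * (\<Sum>i\<in>I. P i f)"
    proof (cases "s > 0")
      case True
      define t where "t = \<epsilon> / (2 * s)"
      have tpos: "t > 0" using True I(2) by (simp add: t_def)
      have "\<forall>i\<in>I. t * P i f < \<epsilon>"
      proof
        fix i assume i: "i \<in> I"
        have "t * P i f \<le> t * s" using Ple[OF i] tpos by (simp add: mult_left_mono)
        also have "t * s = \<epsilon> / 2" using True by (simp add: t_def)
        finally show "t * P i f < \<epsilon>" using I(2) by simp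
      qed
      then have "t * norm (\<phi> f) \<le> 1" using scl tpos by blast
      then have "norm (\<phi> f) \<le> 1 / t" using tpos by (simp add: field_simps)
      also have "1 / t = (2 / \<epsilon>) * s" using True I(2) by (simp add: t_def)
      finally show ?thesis by (simp add: s_def)
    next
      case False
      then have s0: "s = 0" using snn by simp
      have P0: "\<forall>i\<in>I. P i f = 0"
      proof
        fix i assume i: "i \<in> I"
        have "P i f \<le> 0" using Ple[OF i] s0 by simp
        moreover have "P i f \<ge> 0" using Pnn f by blast
        ultimately show "P i f = 0" by linarith
      qed
      have "norm (\<phi> f) = 0"
      proof (rule ccontr)
        assume "norm (\<phi> f) \<noteq> 0"
        then have np: "norm (\<phi> f) > 0" by simp
        have "(2 / norm (\<phi> f)) * norm (\<phi> f) \<le> 1" using scl[of "2 / norm (\<phi> f)"] np P0 I(2) by simp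
        then show False using np by simp
      qed
      then show ?thesis using s0 by (simp add: s_def)
    qed
  qed
  then show ?thesis using I(1) I(2) by (intro exI[of _ I] exI[of _ "2 / \<epsilon>"]) auto
qed


lemma GL:
  assumes \<phi>d: "\<forall>j. \<phi> j \<in> dual_sp fscale V P"
    and \<psi>out: "\<forall>f. f \<notin> V \<longrightarrow> \<psi> f = 0"
    and conv: "\<forall>f\<in>V. (\<lambda>j. \<phi> j f) \<longlonglongrightarrow> \<psi> f"
  shows "\<psi> \<in> dual_sp fscale V P \<and> (\<forall>K\<in>acx_compacts fscale V P. (\<lambda>j. dual_sn K (\<phi> j - \<psi>)) \<longlonglongrightarrow> 0)"
proof -
  have pb: "\<forall>f\<in>V. \<exists>M. \<forall>\<theta>\<in>range \<phi>. norm (\<theta> f) \<le> M"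
  proof
    fix f assume f: "f \<in> V"
    have "convergent (\<lambda>j. \<phi> j f)" using conv f by (auto intro: convergentI)
    then have "Bseq (\<lambda>j. \<phi> j f)" by (rule convergent_imp_Bseq)
    then obtain M where "\<forall>j. norm (\<phi> j f) \<le> M" by (auto elim: BseqE)
    then show "\<exists>M. \<forall>\<theta>\<in>range \<phi>. norm (\<theta> f) \<le> M" by auto
  qed
  have rng: "range \<phi> \<subseteq> dual_sp fscale V P" using \<phi>d by auto
  obtain I C where IC: "finite I" "C \<ge> 0" "\<forall>\<theta>\<in>range \<phi>. \<forall>f\<in>V. norm (\<theta> f) \<le> C * (\<Sum>i\<in>I. P i f)"
    using equicont[OF rng pb] by blast
  have bnd: "\<And>j f. f \<in> V \<Longrightarrow> norm (\<phi> j f) \<le> C * (\<Sum>i\<in>I. P i f)" using IC(3) by blast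
  have \<psi>bnd: "\<forall>f\<in>V. norm (\<psi> f) \<le> C * (\<Sum>i\<in>I. P i f)"
  proof
    fix f assume f: "f \<in> V"
    have "(\<lambda>j. norm (\<phi> j f)) \<longlonglongrightarrow> norm (\<psi> f)" using conv f by (intro tendsto_norm) auto
    then show "norm (\<psi> f) \<le> C * (\<Sum>i\<in>I. P i f)"
      by (rule LIMSEQ_le_const2) (use bnd f in auto)
  qed
  have \<psi>add: "\<forall>f\<in>V. \<forall>g\<in>V. \<psi> (f + g) = \<psi> f + \<psi> g"
  proof (intro ballI)
    fix f g assume f: "f \<in> V" and g: "g \<in> V"
    have fg: "f + g \<in> V" using Vsub f g by (rule lsub_add)
    have 1: "(\<lambda>j. \<phi> j (f + g)) \<longlonglongrightarrow> \<psi> (f + g)" using conv fg by blast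
    have e: "(\<lambda>j. \<phi> j (f + g)) = (\<lambda>j. \<phi> j f + \<phi> j g)" using dual_add[OF \<phi>d[rule_format] f g] by (rule ext)
    have "(\<lambda>j. \<phi> j f + \<phi> j g) \<longlonglongrightarrow> \<psi> f + \<psi> g" using conv f g by (intro tendsto_add) auto
    then have 2: "(\<lambda>j. \<phi> j (f + g)) \<longlonglongrightarrow> \<psi> f + \<psi> g" using e by simp
    show "\<psi> (f + g) = \<psi> f + \<psi> g" by (rule LIMSEQ_unique[OF 1 2])
  qed
  have \<psi>scale: "\<forall>c. \<forall>f\<in>V. \<psi> (fscale c f) = c * \<psi> f"
  proof (intro allI ballI)
    fix c f assume f: "f \<in> V"
    have fg: "fscale c f \<in> V" using Vsub f by (rule lsub_scale)
    have 1: "(\<lambda>j. \<phi> j (fscale c f)) \<longlonglongrightarrow> \<psi> (fscale c f)" using conv fg by blast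
    have e: "(\<lambda>j. \<phi> j (fscale c f)) = (\<lambda>j. c * \<phi> j f)" using dual_scale[OF \<phi>d[rule_format] f] by (rule ext)
    have "(\<lambda>j. c * \<phi> j f) \<longlonglongrightarrow> c * \<psi> f" using conv f by (intro tendsto_mult_left) auto
    then have 2: "(\<lambda>j. \<phi> j (fscale c f)) \<longlonglongrightarrow> c * \<psi> f" using e by simp
    show "\<psi> (fscale c f) = c * \<psi> f" by (rule LIMSEQ_unique[OF 1 2])
  qed
  have \<psi>dual: "\<psi> \<in> dual_sp fscale V P"
  proof -
    have "cont_lin_sn UNIV P (\<lambda>_::unit. norm) V \<psi>"
      unfolding cont_lin_sn_def using \<psi>bnd IC(1) by blast
    moreover have "lin_on fscale (*) V \<psi>" unfolding lin_on_def using \<psi>add \<psi>scale by blast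
    ultimately show ?thesis unfolding dual_sp_def using \<psi>out by blast
  qed
  have unif: "\<forall>K\<in>acx_compacts fscale V P. (\<lambda>j. dual_sn K (\<phi> j - \<psi>)) \<longlonglongrightarrow> 0"
  proof
    fix K assume K: "K \<in> acx_compacts fscale V P"
    then have Kne: "K \<noteq> {}" and KV: "K \<subseteq> V" and Kc: "compactin (sn_topology V P) K"
      by (auto simp: acx_compacts_def)
    show "(\<lambda>j. dual_sn K (\<phi> j - \<psi>)) \<longlonglongrightarrow> 0"
      unfolding tendsto_iff
    proof (intro allI impI)
      fix r :: real assume r: "r > 0"
      define \<eta> where "\<eta> = r / (4 * (C + 1))"
      have \<eta>pos: "\<eta> > 0" unfolding \<eta>_def using IC(2) r by (rule arith_l5)
      have C\<eta>: "C * \<eta> \<le> r / 4" unfolding \<eta>_def using IC(2) r by (rule arith_l4)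
      define Ob where "Ob = (\<lambda>g. {w\<in>V. (\<Sum>i\<in>I. P i (w - g)) < \<eta>})"
      have Oopen: "\<forall>U\<in>Ob ` K. openin (sn_topology V P) U"
      proof
        fix U assume "U \<in> Ob ` K"
        then obtain g where g: "g \<in> K" and U: "U = Ob g" by blast
        then have gV: "g \<in> V" using KV by auto
        show "openin (sn_topology V P) U" unfolding openin_sn U
        proof (rule conjI)
          show "Ob g \<subseteq> V" by (auto simp: Ob_def)
          show "\<forall>w\<in>Ob g. \<exists>J \<epsilon>. finite J \<and> \<epsilon> > 0 \<and> {w'\<in>V. \<forall>i\<in>J. P i (w' - w) < \<epsilon>} \<subseteq> Ob g"
          proof
            fix w assume w: "w \<in> Ob g"
            have wV: "w \<in> V" using w by (simp add: Ob_def)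
            define s where "s = (\<Sum>i\<in>I. P i (w - g))"
            have s\<eta>: "s < \<eta>" using w by (simp add: Ob_def s_def)
            define n where "n = real (card I)"
            have nnn: "n \<ge> 0" by (simp add: n_def)
            define \<delta> where "\<delta> = (\<eta> - s) / (n + 1)"
            have \<delta>pos: "\<delta> > 0" unfolding \<delta>_def using nnn s\<eta> by (intro arith_l6) auto
            have key: "n * \<delta> < \<eta> - s" unfolding \<delta>_def using nnn s\<eta> by (intro arith_l3) auto
            have incl: "{w'\<in>V. \<forall>i\<in>I. P i (w' - w) < \<delta>} \<subseteq> Ob g"
            proof
              fix w' assume w': "w' \<in> {w'\<in>V. \<forall>i\<in>I. P i (w' - w) < \<delta>}"
              have w'V: "w' \<in> V" using w' by simp
              have w'I: "\<forall>i\<in>I. P i (w' - w) < \<delta>" using w' by simp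
              have a: "(\<Sum>i\<in>I. P i (w' - g)) \<le> (\<Sum>i\<in>I. P i (w' - w) + P i (w - g))"
                by (rule sum_mono) (rule P_tri[OF w'V wV gV])
              have b: "(\<Sum>i\<in>I. P i (w' - w) + P i (w - g)) = (\<Sum>i\<in>I. P i (w' - w)) + s"
                by (simp add: sum.distrib s_def)
              have c: "(\<Sum>i\<in>I. P i (w' - w)) \<le> of_nat (card I) * \<delta>"
                by (rule sum_bounded_above) (use w'I in auto)
              have "(\<Sum>i\<in>I. P i (w' - g)) < \<eta>" using a b c key unfolding n_def by linarith
              then show "w' \<in> Ob g" using w'V by (simp add: Ob_def)
            qed
            show "\<exists>J \<epsilon>. finite J \<and> \<epsilon> > 0 \<and> {w'\<in>V. \<forall>i\<in>J. P i (w' - w) < \<epsilon>} \<subseteq> Ob g"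
              using IC(1) \<delta>pos incl by blast
          qed
        qed
      qed
      have Kcov: "K \<subseteq> \<Union>(Ob ` K)"
      proof
        fix g assume g: "g \<in> K"
        then have "g \<in> V" using KV by auto
        moreover have "(\<Sum>i\<in>I. P i (g - g)) < \<eta>" using \<eta>pos by (simp add: P_zero)
        ultimately have "g \<in> Ob g" by (simp add: Ob_def)
        then show "g \<in> \<Union>(Ob ` K)" using g by blast
      qed
      have "\<exists>F. finite F \<and> F \<subseteq> Ob ` K \<and> K \<subseteq> \<Union>F"
        using Kc[unfolded compactin_def, THEN conjunct2, THEN spec[of _ "Ob ` K"]] Oopen Kcov by blast
      then obtain F where F: "finite F" "F \<subseteq> Ob ` K" "K \<subseteq> \<Union>F" by blast
      obtain G where G: "G \<subseteq> K" "finite G" "F = Ob ` G" using finite_subset_image[OF F(1) F(2)] by blast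
      have "\<forall>g\<in>G. eventually (\<lambda>j. dist (\<phi> j g) (\<psi> g) < r / 4) sequentially"
      proof
        fix g assume "g \<in> G"
        then have "g \<in> V" using G(1) KV by auto
        then have "(\<lambda>j. \<phi> j g) \<longlonglongrightarrow> \<psi> g" using conv by blast
        then show "eventually (\<lambda>j. dist (\<phi> j g) (\<psi> g) < r / 4) sequentially"
          unfolding tendsto_iff using r by (elim allE[of _ "r / 4"]) simp
      qed
      then have ev: "eventually (\<lambda>j. \<forall>g\<in>G. dist (\<phi> j g) (\<psi> g) < r / 4) sequentially"
        by (rule eventually_ball_finite[OF G(2)])
      show "eventually (\<lambda>j. dist (dual_sn K (\<phi> j - \<psi>)) 0 < r) sequentially"
      proof (rule eventually_mono[OF ev])
        fix j assume jG: "\<forall>g\<in>G. dist (\<phi> j g) (\<psi> g) < r / 4"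
        have pt: "\<forall>f\<in>K. norm ((\<phi> j - \<psi>) f) \<le> 3 * r / 4"
        proof
          fix f assume f: "f \<in> K"
          then have fV: "f \<in> V" using KV by auto
          obtain g where g: "g \<in> G" "f \<in> Ob g" using F(3) G(3) f by blast
          have gV: "g \<in> V" using g G(1) KV by auto
          have fg: "(\<Sum>i\<in>I. P i (f - g)) < \<eta>" using g(2) by (simp add: Ob_def)
          have fgV: "f - g \<in> V" using lsub_diff[OF Vsub fV gV] .
          have e: "(\<phi> j - \<psi>) f = \<phi> j (f - g) + (\<phi> j g - \<psi> g) - \<psi> (f - g)"
            using dual_diff[OF Vsub \<phi>d[rule_format, of j] fV gV] dual_diff[OF Vsub \<psi>dual fV gV] by simp
          have m: "C * (\<Sum>i\<in>I. P i (f - g)) \<le> C * \<eta>" using fg IC(2) by (intro mult_left_mono) auto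
          have n1: "norm (\<phi> j (f - g)) \<le> r / 4" using bnd[OF fgV, of j] m C\<eta> by linarith
          have n2: "norm (\<psi> (f - g)) \<le> r / 4" using \<psi>bnd fgV m C\<eta> by fastforce
          have n3: "norm (\<phi> j g - \<psi> g) < r / 4" using jG g(1) by (simp add: dist_norm)
          have t1: "norm (\<phi> j (f - g) + (\<phi> j g - \<psi> g) - \<psi> (f - g)) \<le> norm (\<phi> j (f - g) + (\<phi> j g - \<psi> g)) + norm (\<psi> (f - g))"
            by (rule norm_triangle_ineq4)
          have t2: "norm (\<phi> j (f - g) + (\<phi> j g - \<psi> g)) \<le> norm (\<phi> j (f - g)) + norm (\<phi> j g - \<psi> g)"
            by (rule norm_triangle_ineq)
          show "norm ((\<phi> j - \<psi>) f) \<le> 3 * r / 4" unfolding e using t1 t2 n1 n2 n3 by linarith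
        qed
        have up: "dual_sn K (\<phi> j - \<psi>) \<le> 3 * r / 4" unfolding dual_sn_def
          by (rule cSUP_least[OF Kne]) (use pt in blast)
        obtain f0 where f0: "f0 \<in> K" using Kne by blast
        have bdd: "bdd_above ((\<lambda>v. norm ((\<phi> j - \<psi>) v)) ` K)" by (rule bdd_aboveI2) (use pt in blast)
        have "norm ((\<phi> j - \<psi>) f0) \<le> dual_sn K (\<phi> j - \<psi>)" unfolding dual_sn_def
          by (rule cSUP_upper[OF f0 bdd])
        then have lo: "0 \<le> dual_sn K (\<phi> j - \<psi>)" by (meson norm_ge_zero order_trans)
        show "dist (dual_sn K (\<phi> j - \<psi>)) 0 < r" using up lo r by (simp add: dist_real_def)
      qed
    qed
  qed
  show ?thesis using \<psi>dual unif by blast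
qed

end


locale bspaceE = bspace V P for V :: "('a \<Rightarrow> 'k::real_normed_field) set" and P :: "'i \<Rightarrow> ('a \<Rightarrow> 'k) \<Rightarrow> real" +
  fixes scE :: "'k \<Rightarrow> 'e::ab_group_add \<Rightarrow> 'e" and qE :: "'l \<Rightarrow> 'e \<Rightarrow> real"
  assumes Elc: "lc_hausdorff scE qE"
begin

lemma E_mod: "module scE" using Elc by (simp add: lc_hausdorff_def module_iff_vector_space)

lemma scE_neg: "scE (-1) x = - x"
  using module.scale_minus_left[OF E_mod, of 1 x] module.scale_one[OF E_mod, of x] by simp

lemma scE_zero: "scE 0 x = 0"
  using module.scale_zero_left[OF E_mod] by simp

lemma q_sub: "qE l (x + y) \<le> qE l x + qE l y" using Elc by (simp add: lc_hausdorff_def is_seminorm_def)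
lemma q_scale: "qE l (scE c x) = norm c * qE l x" using Elc by (simp add: lc_hausdorff_def is_seminorm_def)

lemma q_neg: "qE l (- x) = qE l x"
  using q_scale[of l "-1" x] scE_neg[of x] by simp

lemma q_zero: "qE l 0 = 0"
  using q_scale[of l 0 0] scE_zero[of 0] by simp

lemma q_nn: "0 \<le> qE l x"
proof -
  have "qE l 0 \<le> qE l x + qE l (- x)" using q_sub[of l x "- x"] by simp
  then show ?thesis using q_zero q_neg by simp
qed

lemma q_tri: "qE l (x - y) \<le> qE l (x - z) + qE l (z - y)"
proof -
  have "x - y = (x - z) + (z - y)" by simp
  then show ?thesis using q_sub[of l "x - z" "z - y"] by simp
qed

lemma q_sym: "qE l (x - y) = qE l (y - x)"
  using q_neg[of l "y - x"] by simp

lemma E_sep: "(\<forall>l. qE l e = 0) \<Longrightarrow> e = 0" using Elc by (simp add: lc_hausdorff_def)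

lemma u_add: "u \<in> eps_prod fscale V P scE qE \<Longrightarrow> a \<in> dual_sp fscale V P \<Longrightarrow> b \<in> dual_sp fscale V P \<Longrightarrow> u (a + b) = u a + u b"
  by (simp add: eps_prod_def lin_on_def)
lemma u_scale: "u \<in> eps_prod fscale V P scE qE \<Longrightarrow> a \<in> dual_sp fscale V P \<Longrightarrow> u (fscale c a) = scE c (u a)"
  by (simp add: eps_prod_def lin_on_def)
lemma u_diff: "u \<in> eps_prod fscale V P scE qE \<Longrightarrow> a \<in> dual_sp fscale V P \<Longrightarrow> b \<in> dual_sp fscale V P \<Longrightarrow> u (a - b) = u a - u b"
proof -
  assume u: "u \<in> eps_prod fscale V P scE qE" and a: "a \<in> dual_sp fscale V P" and b: "b \<in> dual_sp fscale V P"
  have "u (a - b) = u (a + fscale (-1) b)" by (simp add: minus_fscale)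
  also have "\<dots> = u a + scE (-1) (u b)" using u_add[OF u a dual_closed_scale[OF b]] u_scale[OF u b] by simp
  finally show ?thesis by (simp add: scE_neg)
qed

lemma GL_E:
  assumes u: "u \<in> eps_prod fscale V P scE qE"
    and \<phi>d: "\<forall>j. \<phi> j \<in> dual_sp fscale V P"
    and \<psi>out: "\<forall>f. f \<notin> V \<longrightarrow> \<psi> f = 0"
    and conv: "\<forall>f\<in>V. (\<lambda>j. \<phi> j f) \<longlonglongrightarrow> \<psi> f"
    and \<epsilon>: "\<epsilon> > 0"
  shows "eventually (\<lambda>j. qE l (u (\<phi> j) - u \<psi>) < \<epsilon>) sequentially"
proof -
  have G: "\<psi> \<in> dual_sp fscale V P" "\<forall>K\<in>acx_compacts fscale V P. (\<lambda>j. dual_sn K (\<phi> j - \<psi>)) \<longlonglongrightarrow> 0"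
    using GL[OF \<phi>d \<psi>out conv] by auto
  obtain Ks C where KC: "finite Ks" "Ks \<subseteq> acx_compacts fscale V P"
      "\<forall>v\<in>dual_sp fscale V P. qE l (u v) \<le> C * (\<Sum>K\<in>Ks. dual_sn K v)"
    using u unfolding eps_prod_def cont_lin_sn_def by blast
  have "(\<lambda>j. C * (\<Sum>K\<in>Ks. dual_sn K (\<phi> j - \<psi>))) \<longlonglongrightarrow> C * (\<Sum>K\<in>Ks. 0)"
    using G(2) KC(2) by (intro tendsto_mult_left tendsto_sum) auto
  then have "(\<lambda>j. C * (\<Sum>K\<in>Ks. dual_sn K (\<phi> j - \<psi>))) \<longlonglongrightarrow> 0" by simp
  then have ev: "eventually (\<lambda>j. C * (\<Sum>K\<in>Ks. dual_sn K (\<phi> j - \<psi>)) < \<epsilon>) sequentially"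
    using \<epsilon> by (rule order_tendstoD(2))
  show ?thesis
  proof (rule eventually_mono[OF ev])
    fix j assume j: "C * (\<Sum>K\<in>Ks. dual_sn K (\<phi> j - \<psi>)) < \<epsilon>"
    have d: "\<phi> j - \<psi> \<in> dual_sp fscale V P" using \<phi>d G(1) by (simp add: dual_closed_diff)
    have "u (\<phi> j) - u \<psi> = u (\<phi> j - \<psi>)" using u_diff[OF u \<phi>d[rule_format] G(1)] by simp
    moreover have "qE l (u (\<phi> j - \<psi>)) \<le> C * (\<Sum>K\<in>Ks. dual_sn K (\<phi> j - \<psi>))" using KC(3) d by blast
    ultimately show "qE l (u (\<phi> j) - u \<psi>) < \<epsilon>" using j by simp
  qed
qed

lemma pdE_unique:
  assumes 1: "has_pd scE qE n g x v" and 2: "has_pd scE qE n g x v'"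
  shows "v = v'"
proof -
  have "\<forall>l. qE l (v - v') = 0"
  proof
    fix l
    have "qE l (v - v') \<le> 0"
    proof (rule field_le_epsilon)
      fix e :: real assume e: "e > 0"
      obtain d1 where d1: "d1 > 0" "\<forall>h::real. h \<noteq> 0 \<and> \<bar>h\<bar> < d1 \<longrightarrow>
         qE l (scE (of_real (inverse h)) (g (x + h *\<^sub>R axis n 1) - g x) - v) < e / 2"
        using 1 e unfolding has_pd_def by (meson half_gt_zero)
      obtain d2 where d2: "d2 > 0" "\<forall>h::real. h \<noteq> 0 \<and> \<bar>h\<bar> < d2 \<longrightarrow>
         qE l (scE (of_real (inverse h)) (g (x + h *\<^sub>R axis n 1) - g x) - v') < e / 2"
        using 2 e unfolding has_pd_def by (meson half_gt_zero)
      define h where "h = min d1 d2 / 2"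
      have h: "h \<noteq> 0" "\<bar>h\<bar> < d1" "\<bar>h\<bar> < d2" using d1 d2 by (auto simp: h_def)
      define a where "a = scE (of_real (inverse h)) (g (x + h *\<^sub>R axis n 1) - g x)"
      have a1: "qE l (a - v) < e / 2" using d1(2) h unfolding a_def by blast
      have a2: "qE l (a - v') < e / 2" using d2(2) h unfolding a_def by blast
      have "qE l (v - v') \<le> qE l (v - a) + qE l (a - v')" by (rule q_tri)
      also have "qE l (v - a) = qE l (a - v)" by (rule q_sym)
      finally show "qE l (v - v') \<le> 0 + e" using a1 a2 by simp
    qed
    then show "qE l (v - v') = 0" using q_nn[of l "v - v'"] by simp
  qed
  then have "v - v' = 0" by (rule E_sep)
  then show ?thesis by simp
qed

lemma pdE_eq: "has_pd scE qE n g x v \<Longrightarrow> pd scE qE n g x = v"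
  unfolding pd_def using pdE_unique by blast

end

lemma has_pd_scalar_seq:
  fixes g :: "real^'n::finite \<Rightarrow> 'k::real_normed_field"
  assumes hp: "has_pd (*) (\<lambda>_::unit. norm) n g x v" and h0: "\<forall>j. h j \<noteq> 0" and hl: "h \<longlonglongrightarrow> 0"
  shows "(\<lambda>j. of_real (inverse (h j)) * (g (x + h j *\<^sub>R axis n 1) - g x)) \<longlonglongrightarrow> v"
  unfolding tendsto_iff
proof (intro allI impI)
  fix e :: real assume e: "e > 0"
  obtain d where d: "d > 0" "\<forall>h::real. h \<noteq> 0 \<and> \<bar>h\<bar> < d \<longrightarrow>
       norm (of_real (inverse h) * (g (x + h *\<^sub>R axis n 1) - g x) - v) < e"
    using hp e unfolding has_pd_def by blast
  have "eventually (\<lambda>j. dist (h j) 0 < d) sequentially" using hl d(1) unfolding tendsto_iff by blast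
  then show "eventually (\<lambda>j. dist (of_real (inverse (h j)) * (g (x + h j *\<^sub>R axis n 1) - g x)) v < e) sequentially"
  proof (rule eventually_mono)
    fix j assume "dist (h j) 0 < d"
    then have "\<bar>h j\<bar> < d" by simp
    then show "dist (of_real (inverse (h j)) * (g (x + h j *\<^sub>R axis n 1) - g x)) v < e"
      using d(2) h0 by (simp add: dist_norm)
  qed
qed

lemma pd_scalar_eq:
  fixes g :: "real^'n::finite \<Rightarrow> 'k::real_normed_field"
  assumes hp: "has_pd (*) (\<lambda>_::unit. norm) n g x v"
  shows "pd (*) (\<lambda>_::unit. norm) n g x = v"
proof -
  define h where "h = (\<lambda>j. inverse (real (Suc j)))"
  have h0: "\<forall>j. h j \<noteq> 0" by (simp add: h_def)
  have hl: "h \<longlonglongrightarrow> 0" unfolding h_def by (rule LIMSEQ_inverse_real_of_nat)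
  have "\<And>v'. has_pd (*) (\<lambda>_::unit. norm) n g x v' \<Longrightarrow> v' = v"
  proof -
    fix v' assume hp': "has_pd (*) (\<lambda>_::unit. norm) n g x v'"
    show "v' = v" using LIMSEQ_unique[OF has_pd_scalar_seq[OF hp' h0 hl] has_pd_scalar_seq[OF hp h0 hl]] .
  qed
  then show ?thesis unfolding pd_def using hp by (rule the_equality[rotated])
qed

lemma cont_seq:
  fixes g :: "real^'n::finite \<Rightarrow> 'k::real_normed_field"
  assumes c: "cont_on_sn (\<lambda>_::unit. norm) \<Omega> g" and x: "x \<in> \<Omega>" and y: "\<forall>j. y j \<in> \<Omega>" and yl: "y \<longlonglongrightarrow> x"
  shows "(\<lambda>j. g (y j)) \<longlonglongrightarrow> g x"
  unfolding tendsto_iff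
proof (intro allI impI)
  fix e :: real assume e: "e > 0"
  obtain d where d: "d > 0" "\<forall>z\<in>\<Omega>. dist z x < d \<longrightarrow> norm (g z - g x) < e"
    using c x e unfolding cont_on_sn_def by blast
  have "eventually (\<lambda>j. dist (y j) x < d) sequentially" using yl d(1) unfolding tendsto_iff by blast
  then show "eventually (\<lambda>j. dist (g (y j)) (g x) < e) sequentially"
    by (rule eventually_mono) (use d(2) y in \<open>auto simp: dist_norm\<close>)
qed

lemma Ck_foldr:
  "Ck_sn sc q \<Omega> m f \<Longrightarrow> length w \<le> m \<Longrightarrow> Ck_sn sc q \<Omega> (m - length w) (foldr (pd sc q) w f)"
proof (induction w)
  case Nil
  then show ?case by simp
next
  case (Cons n w)
  then have "Ck_sn sc q \<Omega> (Suc (m - length (n # w))) (foldr (pd sc q) w f)"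
    by (simp add: Suc_diff_Suc)
  then show ?case by simp
qed


abbreviation DS :: "'n::finite list \<Rightarrow> (real^'n \<Rightarrow> 'k::real_normed_field) \<Rightarrow> real^'n \<Rightarrow> 'k" where
  "DS w f \<equiv> foldr (pd (*) (\<lambda>_::unit. norm)) w f"

locale mctx = bspaceE V P scE qE
  for V :: "((real,'n::{finite,linorder}) vec \<Rightarrow> 'k::real_normed_field) set" and P :: "'i \<Rightarrow> ((real,'n) vec \<Rightarrow> 'k) \<Rightarrow> real"
  and scE :: "'k \<Rightarrow> 'e::ab_group_add \<Rightarrow> 'e" and qE :: "'l \<Rightarrow> 'e \<Rightarrow> real" +
  fixes \<Omega> :: "(real,'n) vec set" and u :: "(((real,'n) vec \<Rightarrow> 'k) \<Rightarrow> 'k) \<Rightarrow> 'e"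
  assumes open\<Omega>: "open \<Omega>"
    and delta: "\<forall>x\<in>\<Omega>. ext_on V (\<lambda>f. f x) \<in> dual_sp fscale V P"
    and uE: "u \<in> eps_prod fscale V P scE qE"
begin

abbreviation "SS \<equiv> (\<lambda>x. u (ext_on V (\<lambda>f. f x)))"
abbreviation "DE w \<equiv> foldr (pd scE qE) w SS"
abbreviation "dl w x \<equiv> ext_on V (\<lambda>f. DS w f x)"

definition Prop where "Prop w \<longleftrightarrow> (\<forall>x\<in>\<Omega>. dl w x \<in> dual_sp fscale V P \<and> DE w x = u (dl w x))"

lemma CT:
  assumes sc: "\<forall>f\<in>V. cont_on_sn (\<lambda>_::unit. norm) \<Omega> (DS w f)" and pw: "Prop w"
  shows "cont_on_sn qE \<Omega> (DE w)"
  unfolding cont_on_sn_def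
proof (intro ballI allI impI)
  fix x l and \<epsilon> :: real assume x: "x \<in> \<Omega>" and \<epsilon>: "\<epsilon> > 0"
  have ev: "eventually (\<lambda>y. qE l (u (dl w y) - u (dl w x)) < \<epsilon>) (at x within \<Omega>)"
  proof (rule sequentially_imp_eventually_within, intro allI impI)
    fix y assume y: "(\<forall>j. y j \<in> \<Omega> \<and> y j \<noteq> x) \<and> y \<longlonglongrightarrow> x"
    have \<phi>d: "\<forall>j. dl w (y j) \<in> dual_sp fscale V P" using pw y unfolding Prop_def by blast
    have \<psi>out: "\<forall>f. f \<notin> V \<longrightarrow> dl w x f = 0" by (simp add: ext_on_def)
    have conv: "\<forall>f\<in>V. (\<lambda>j. dl w (y j) f) \<longlonglongrightarrow> dl w x f"
    proof
      fix f assume f: "f \<in> V"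
      have "(\<lambda>j. DS w f (y j)) \<longlonglongrightarrow> DS w f x" using cont_seq[OF sc[rule_format, OF f] x] y by blast
      then show "(\<lambda>j. dl w (y j) f) \<longlonglongrightarrow> dl w x f" using f by (simp add: ext_on_def)
    qed
    show "eventually (\<lambda>j. qE l (u (dl w (y j)) - u (dl w x)) < \<epsilon>) sequentially"
      by (rule GL_E[OF uE \<phi>d \<psi>out conv \<epsilon>])
  qed
  then obtain d where d: "d > 0" "\<forall>y\<in>\<Omega>. y \<noteq> x \<and> dist y x < d \<longrightarrow> qE l (u (dl w y) - u (dl w x)) < \<epsilon>"
    unfolding eventually_at by blast
  have "\<forall>y\<in>\<Omega>. dist y x < d \<longrightarrow> qE l (DE w y - DE w x) < \<epsilon>"
  proof (intro ballI impI)
    fix y assume y: "y \<in> \<Omega>" "dist y x < d"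
    show "qE l (DE w y - DE w x) < \<epsilon>"
    proof (cases "y = x")
      case True then show ?thesis using \<epsilon> by (simp add: q_zero)
    next
      case False
      have "DE w y = u (dl w y)" "DE w x = u (dl w x)" using pw y(1) x unfolding Prop_def by auto
      then show ?thesis using d(2) y False by simp
    qed
  qed
  then show "\<exists>\<delta>>0. \<forall>y\<in>\<Omega>. dist y x < \<delta> \<longrightarrow> qE l (DE w y - DE w x) < \<epsilon>" using d(1) by blast
qed

lemma DQ:
  assumes pw: "Prop w" and x: "x \<in> \<Omega>"
    and hs: "\<forall>f\<in>V. has_pd (*) (\<lambda>_::unit. norm) n (DS w f) x (DS (n # w) f x)"
  shows "dl (n # w) x \<in> dual_sp fscale V P \<and> has_pd scE qE n (DE w) x (u (dl (n # w) x))"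
proof -
  obtain r where r: "r > 0" "ball x r \<subseteq> \<Omega>" using open\<Omega> x unfolding open_contains_ball by blast
  define e where "e = axis n (1::real)"
  have inb: "\<And>h. \<bar>h\<bar> < r \<Longrightarrow> x + h *\<^sub>R e \<in> \<Omega>"
  proof -
    fix h :: real assume "\<bar>h\<bar> < r"
    then have "dist x (x + h *\<^sub>R e) < r" by (simp add: dist_norm e_def)
    then show "x + h *\<^sub>R e \<in> \<Omega>" using r(2) by auto
  qed
  define \<Phi> where "\<Phi> = (\<lambda>h::real. fscale (of_real (inverse h)) (dl w (x + h *\<^sub>R e) - dl w x))"
  define \<psi> where "\<psi> = dl (n # w) x"
  have key: "\<And>hs::nat \<Rightarrow> real. \<forall>j. hs j \<in> ball 0 r \<and> hs j \<noteq> 0 \<Longrightarrow> hs \<longlonglongrightarrow> 0 \<Longrightarrow>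
      (\<forall>j. \<Phi> (hs j) \<in> dual_sp fscale V P) \<and> (\<forall>f. f \<notin> V \<longrightarrow> \<psi> f = 0) \<and> (\<forall>f\<in>V. (\<lambda>j. \<Phi> (hs j) f) \<longlonglongrightarrow> \<psi> f)"
  proof -
    fix hs :: "nat \<Rightarrow> real" assume hs1: "\<forall>j. hs j \<in> ball 0 r \<and> hs j \<noteq> 0" and hs2: "hs \<longlonglongrightarrow> 0"
    have a: "\<forall>j. \<Phi> (hs j) \<in> dual_sp fscale V P"
    proof
      fix j
      have "\<bar>hs j\<bar> < r" using hs1 by (simp add: dist_real_def)
      then have "x + hs j *\<^sub>R e \<in> \<Omega>" by (rule inb)
      then have "dl w (x + hs j *\<^sub>R e) \<in> dual_sp fscale V P" using pw unfolding Prop_def by blast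
      moreover have "dl w x \<in> dual_sp fscale V P" using pw x unfolding Prop_def by blast
      ultimately show "\<Phi> (hs j) \<in> dual_sp fscale V P" unfolding \<Phi>_def by (intro dual_closed_scale dual_closed_diff)
    qed
    have b: "\<forall>f. f \<notin> V \<longrightarrow> \<psi> f = 0" by (simp add: \<psi>_def ext_on_def)
    have c: "\<forall>f\<in>V. (\<lambda>j. \<Phi> (hs j) f) \<longlonglongrightarrow> \<psi> f"
    proof
      fix f assume f: "f \<in> V"
      have h0: "\<forall>j. hs j \<noteq> 0" using hs1 by blast
      have "(\<lambda>j. of_real (inverse (hs j)) * (DS w f (x + hs j *\<^sub>R axis n 1) - DS w f x)) \<longlonglongrightarrow> DS (n # w) f x"
        by (rule has_pd_scalar_seq[OF hs[rule_format, OF f] h0 hs2])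
      then show "(\<lambda>j. \<Phi> (hs j) f) \<longlonglongrightarrow> \<psi> f" using f by (simp add: \<Phi>_def \<psi>_def ext_on_def e_def fun_diff_def)
    qed
    show "(\<forall>j. \<Phi> (hs j) \<in> dual_sp fscale V P) \<and> (\<forall>f. f \<notin> V \<longrightarrow> \<psi> f = 0) \<and> (\<forall>f\<in>V. (\<lambda>j. \<Phi> (hs j) f) \<longlonglongrightarrow> \<psi> f)"
      using a b c by blast
  qed
  define hs0 where "hs0 = (\<lambda>j. r / 2 * inverse (real (Suc j)))"
  have hs01: "\<forall>j. hs0 j \<in> ball 0 r \<and> hs0 j \<noteq> 0"
  proof
    fix j
    have p: "0 < hs0 j" using r(1) by (simp add: hs0_def)
    have "inverse (real (Suc j)) \<le> 1" by (simp add: inverse_le_1_iff)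
    then have q: "hs0 j \<le> r / 2 * 1" unfolding hs0_def using r(1) by (intro mult_left_mono) auto
    have "dist 0 (hs0 j) = hs0 j" using p by (simp add: dist_real_def)
    then show "hs0 j \<in> ball 0 r \<and> hs0 j \<noteq> 0" using p q r(1) by simp
  qed
  have hs0l: "hs0 \<longlonglongrightarrow> 0"
  proof -
    have "(\<lambda>j. r / 2 * inverse (real (Suc j))) \<longlonglongrightarrow> r / 2 * 0"
      by (intro tendsto_mult_left LIMSEQ_inverse_real_of_nat)
    then show ?thesis by (simp add: hs0_def)
  qed
  have k0: "(\<forall>j. \<Phi> (hs0 j) \<in> dual_sp fscale V P) \<and> (\<forall>f. f \<notin> V \<longrightarrow> \<psi> f = 0) \<and> (\<forall>f\<in>V. (\<lambda>j. \<Phi> (hs0 j) f) \<longlonglongrightarrow> \<psi> f)"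
    using key[OF hs01 hs0l] .
  have \<psi>d: "\<psi> \<in> dual_sp fscale V P" using GL[of "\<lambda>j. \<Phi> (hs0 j)" \<psi>] k0 by blast
  have hp: "has_pd scE qE n (DE w) x (u \<psi>)"
    unfolding has_pd_def
  proof (intro allI impI)
    fix l and \<epsilon> :: real assume \<epsilon>: "\<epsilon> > 0"
    have ev: "eventually (\<lambda>h. qE l (u (\<Phi> h) - u \<psi>) < \<epsilon>) (at 0 within ball 0 r)"
    proof (rule sequentially_imp_eventually_within, intro allI impI)
      fix hs :: "nat \<Rightarrow> real" assume hs: "(\<forall>j. hs j \<in> ball 0 r \<and> hs j \<noteq> 0) \<and> hs \<longlonglongrightarrow> 0"
      then have k: "(\<forall>j. \<Phi> (hs j) \<in> dual_sp fscale V P) \<and> (\<forall>f. f \<notin> V \<longrightarrow> \<psi> f = 0) \<and> (\<forall>f\<in>V. (\<lambda>j. \<Phi> (hs j) f) \<longlonglongrightarrow> \<psi> f)"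
        using key by blast
      show "eventually (\<lambda>j. qE l (u (\<Phi> (hs j)) - u \<psi>) < \<epsilon>) sequentially"
        using GL_E[OF uE _ _ _ \<epsilon>, of "\<lambda>j. \<Phi> (hs j)" \<psi> l] k by blast
    qed
    then obtain d where d: "d > 0" "\<forall>h\<in>ball 0 r. h \<noteq> 0 \<and> dist h 0 < d \<longrightarrow> qE l (u (\<Phi> h) - u \<psi>) < \<epsilon>"
      unfolding eventually_at by blast
    show "\<exists>\<delta>>0. \<forall>h. h \<noteq> 0 \<and> \<bar>h\<bar> < \<delta> \<longrightarrow>
       qE l (scE (of_real (inverse h)) (DE w (x + h *\<^sub>R axis n 1) - DE w x) - u \<psi>) < \<epsilon>"
    proof (intro exI[of _ "min d r"] conjI allI impI)
      show "min d r > 0" using d(1) r(1) by simp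
      fix h :: real assume h: "h \<noteq> 0 \<and> \<bar>h\<bar> < min d r"
      have hr: "\<bar>h\<bar> < r" using h by simp
      have hb: "h \<in> ball 0 r" using hr by (simp add: dist_real_def)
      have xh: "x + h *\<^sub>R e \<in> \<Omega>" using hr by (rule inb)
      have d1: "dl w (x + h *\<^sub>R e) \<in> dual_sp fscale V P" "DE w (x + h *\<^sub>R e) = u (dl w (x + h *\<^sub>R e))"
        using pw xh unfolding Prop_def by auto
      have d2: "dl w x \<in> dual_sp fscale V P" "DE w x = u (dl w x)" using pw x unfolding Prop_def by auto
      have eq: "scE (of_real (inverse h)) (DE w (x + h *\<^sub>R e) - DE w x) = u (\<Phi> h)"
        unfolding \<Phi>_def d1(2) d2(2) using u_scale[OF uE dual_closed_diff[OF d1(1) d2(1)]] u_diff[OF uE d1(1) d2(1)] by simp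
      have "qE l (u (\<Phi> h) - u \<psi>) < \<epsilon>" using d(2) hb h by (simp add: dist_real_def)
      then show "qE l (scE (of_real (inverse h)) (DE w (x + h *\<^sub>R axis n 1) - DE w x) - u \<psi>) < \<epsilon>"
        using eq by (simp add: e_def)
    qed
  qed
  show ?thesis using \<psi>d hp unfolding \<psi>_def by blast
qed

lemma TR:
  "(\<forall>f\<in>V. Ck_sn (*) (\<lambda>_::unit. norm) \<Omega> m (DS w f)) \<Longrightarrow> Prop w \<Longrightarrow>
    Ck_sn scE qE \<Omega> m (DE w) \<and> (\<forall>w'. length w' \<le> m \<longrightarrow> Prop (w' @ w))"
proof (induction m arbitrary: w)
  case 0
  have "\<forall>f\<in>V. cont_on_sn (\<lambda>_::unit. norm) \<Omega> (DS w f)" using 0 by simp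
  then have "cont_on_sn qE \<Omega> (DE w)" using CT 0 by blast
  then show ?case using 0 by simp
next
  case (Suc m)
  have C1s: "\<forall>f\<in>V. C1_sn (*) (\<lambda>_::unit. norm) \<Omega> (DS w f)"
    and Cks: "\<forall>f\<in>V. \<forall>n. Ck_sn (*) (\<lambda>_::unit. norm) \<Omega> m (pd (*) (\<lambda>_::unit. norm) n (DS w f))"
    using Suc.prems(1) by auto
  have hs: "\<And>n. \<forall>f\<in>V. has_pd (*) (\<lambda>_::unit. norm) n (DS w f) x (DS (n # w) f x)" if x: "x \<in> \<Omega>" for x
  proof
    fix n f assume f: "f \<in> V"
    obtain v where v: "has_pd (*) (\<lambda>_::unit. norm) n (DS w f) x v" using C1s f x unfolding C1_sn_def by blast
    have "DS (n # w) f x = v" using pd_scalar_eq[OF v] by simp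
    then show "has_pd (*) (\<lambda>_::unit. norm) n (DS w f) x (DS (n # w) f x)" using v by simp
  qed
  have PN: "Prop (n # w) \<and> (\<forall>x\<in>\<Omega>. has_pd scE qE n (DE w) x (u (dl (n # w) x)))" for n
  proof -
    have A: "\<forall>x\<in>\<Omega>. dl (n # w) x \<in> dual_sp fscale V P \<and> has_pd scE qE n (DE w) x (u (dl (n # w) x))"
      using DQ[OF Suc.prems(2) _ hs] by blast
    have "Prop (n # w)" unfolding Prop_def
    proof
      fix x assume x: "x \<in> \<Omega>"
      have "pd scE qE n (DE w) x = u (dl (n # w) x)" using pdE_eq A x by blast
      then show "dl (n # w) x \<in> dual_sp fscale V P \<and> DE (n # w) x = u (dl (n # w) x)" using A x by simp
    qed
    then show ?thesis using A by blast
  qed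
  have IH: "Ck_sn scE qE \<Omega> m (DE (n # w)) \<and> (\<forall>w'. length w' \<le> m \<longrightarrow> Prop (w' @ n # w))" for n
  proof -
    have "\<forall>f\<in>V. Ck_sn (*) (\<lambda>_::unit. norm) \<Omega> m (DS (n # w) f)" using Cks by simp
    then show ?thesis using Suc.IH PN by blast
  qed
  have contn: "cont_on_sn qE \<Omega> (DE (n # w))" for n
  proof -
    have "\<forall>f\<in>V. cont_on_sn (\<lambda>_::unit. norm) \<Omega> (DS (n # w) f)" using C1s unfolding C1_sn_def by simp
    then show "cont_on_sn qE \<Omega> (DE (n # w))" using CT PN by blast
  qed
  have C1E: "C1_sn scE qE \<Omega> (DE w)"
  proof -
    have "\<forall>n. \<forall>x\<in>\<Omega>. \<exists>v. has_pd scE qE n (DE w) x v" using PN by blast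
    moreover have "\<forall>n. cont_on_sn qE \<Omega> (pd scE qE n (DE w))" using contn by simp
    ultimately show ?thesis unfolding C1_sn_def by blast
  qed
  have Prop_all: "\<forall>w'. length w' \<le> Suc m \<longrightarrow> Prop (w' @ w)"
  proof (intro allI impI)
    fix w' :: "'n list" assume len: "length w' \<le> Suc m"
    show "Prop (w' @ w)"
    proof (cases w' rule: rev_cases)
      case Nil then show ?thesis using Suc.prems(2) by simp
    next
      case (snoc w'' n)
      then have "length w'' \<le> m" using len by simp
      then show ?thesis using IH[of n] snoc by simp
    qed
  qed
  have "\<forall>n. Ck_sn scE qE \<Omega> m (pd scE qE n (DE w))" using IH by simp
  then show ?case using C1E Prop_all by simp
qed

lemma main:
  assumes inc: "\<forall>f\<in>V. Ck_enat (*) (\<lambda>_::unit. norm) \<Omega> k f"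
  shows "Ck_enat scE qE \<Omega> k SS \<and> (\<forall>w. enat (length w) \<le> k \<longrightarrow> Prop w)"
proof -
  have P0: "Prop []" unfolding Prop_def using delta by simp
  show ?thesis
  proof (cases k)
    case (enat m)
    have "\<forall>f\<in>V. Ck_sn (*) (\<lambda>_::unit. norm) \<Omega> m (DS [] f)" using inc enat by (simp add: Ck_enat_def)
    then have "Ck_sn scE qE \<Omega> m (DE []) \<and> (\<forall>w'. length w' \<le> m \<longrightarrow> Prop (w' @ []))" using TR P0 by blast
    then show ?thesis using enat by (simp add: Ck_enat_def)
  next
    case infinity
    have A: "Ck_sn scE qE \<Omega> m (DE []) \<and> (\<forall>w'. length w' \<le> m \<longrightarrow> Prop (w' @ []))" for m
    proof -
      have "\<forall>f\<in>V. Ck_sn (*) (\<lambda>_::unit. norm) \<Omega> m (DS [] f)" using inc infinity by (simp add: Ck_enat_def)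
      then show ?thesis using TR P0 by blast
    qed
    have "Prop w" for w using A[of "length w"] by simp
    moreover have "Ck_sn scE qE \<Omega> m SS" for m using A[of m] by simp
    ultimately show ?thesis using infinity by (simp add: Ck_enat_def)
  qed
qed

end


lemma foldr_funpow_concat:
  "foldr (\<lambda>n g. (F n ^^ \<beta> n) g) xs f = foldr F (concat (map (\<lambda>n. replicate (\<beta> n) n) xs)) f"
  by (induction xs) simp_all

lemma pd_multi_word:
  "pd_multi sc q \<beta> f = foldr (pd sc q) (concat (map (\<lambda>n. replicate (\<beta> n) n) (sorted_list_of_set UNIV))) f"
  unfolding pd_multi_def by (rule foldr_funpow_concat)

lemma word_len:
  "length (concat (map (\<lambda>n. replicate (\<beta> n) n) (sorted_list_of_set (UNIV::'n::{finite,linorder} set)))) = sum \<beta> UNIV"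
proof -
  have "length (concat (map (\<lambda>n. replicate (\<beta> n) n) (sorted_list_of_set (UNIV::'n set))))
      = sum_list (map \<beta> (sorted_list_of_set (UNIV::'n set)))"
    by (simp add: length_concat comp_def)
  also have "\<dots> = sum \<beta> (set (sorted_list_of_set (UNIV::'n set)))"
    by (rule sum_list_distinct_conv_sum_set) simp
  finally show ?thesis by simp
qed

theorem proposition4p12:
  fixes \<Omega> :: "(real,'n::{finite,linorder}) vec set"
    and k :: enat
    and scE :: "'k::real_normed_field \<Rightarrow> 'e::ab_group_add \<Rightarrow> 'e"
    and qE :: "'l \<Rightarrow> 'e \<Rightarrow> real"
    and AP :: "((real,'n) vec \<Rightarrow> 'k) set"
    and D :: "'m \<Rightarrow> ((real,'n) vec \<Rightarrow> 'k) set"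
    and T :: "'m \<Rightarrow> ((real,'n) vec \<Rightarrow> 'k) \<Rightarrow> 'w \<Rightarrow> 'k"
    and \<omega> :: "'m \<Rightarrow> 'w set"
    and \<nu> :: "'j \<Rightarrow> 'm \<Rightarrow> 'w \<Rightarrow> real"
  defines "FV \<equiv> FV_set AP D T \<omega> \<nu>"
    and "P \<equiv> FV_sn T \<omega> \<nu>"
  assumes open_\<Omega>: "open \<Omega>"
    and E_lc: "lc_hausdorff scE qE"
    and E_nontriv: "\<exists>e::'e. e \<noteq> 0"
    and \<omega>_ne: "\<forall>m. \<omega> m \<noteq> {}"
    and \<nu>_nonneg: "\<forall>j m x. \<nu> j m x \<ge> 0"
    and \<nu>_pos: "\<forall>m. \<forall>x\<in>\<omega> m. \<exists>j. \<nu> j m x > 0"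
    and AP_sub: "lin_subspace AP"
    and AP_ext: "\<forall>f\<in>AP. \<forall>x. x \<notin> \<Omega> \<longrightarrow> f x = 0"
    and D_sub: "\<forall>m. lin_subspace (D m)"
    and D_ext: "\<forall>m. \<forall>f\<in>D m. \<forall>x. x \<notin> \<Omega> \<longrightarrow> f x = 0"
    and T_lin: "\<forall>m. lin_on fscale fscale (D m) (T m)"
    and dom_hausdorff: "\<forall>f\<in>FV. (\<forall>i. P i f = 0) \<longrightarrow> f = 0"
    and dom_directed: "directed_sn FV P"
    and dom_delta: "\<forall>x\<in>\<Omega>. ext_on FV (\<lambda>f. f x) \<in> dual_sp fscale FV P"
    and incl_welldef: "\<forall>f\<in>FV. Ck_enat (*) (\<lambda>_::unit. norm) \<Omega> k f"
    and incl_cont: "\<forall>K \<beta>. compact K \<and> K \<subseteq> \<Omega> \<and> enat (sum \<beta> UNIV) \<le> k \<longrightarrow>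
        (\<exists>I C. finite I \<and> (\<forall>f\<in>FV. \<forall>x\<in>K.
           norm (pd_multi (*) (\<lambda>_::unit. norm) \<beta> f x) \<le> C * (\<Sum>i\<in>I. P i f)))"
    and barrelled: "barrelled fscale FV P"
  shows "\<forall>u\<in>eps_prod fscale FV P scE qE.
     Ck_enat scE qE \<Omega> k (\<lambda>x. u (ext_on FV (\<lambda>f. f x))) \<and>
     (\<forall>\<beta>. enat (sum \<beta> UNIV) \<le> k \<longrightarrow> (\<forall>x\<in>\<Omega>.
        pd_multi scE qE \<beta> (\<lambda>y. u (ext_on FV (\<lambda>f. f y))) x
          = u (ext_on FV (\<lambda>f. pd_multi (*) (\<lambda>_::unit. norm) \<beta> f x))))"
  
proof (intro ballI)
  fix u assume uE: "u \<in> eps_prod fscale FV P scE qE"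
  have Tadd: "\<And>m f g. f \<in> D m \<Longrightarrow> g \<in> D m \<Longrightarrow> T m (f + g) = T m f + T m g"
    using T_lin by (simp add: lin_on_def)
  have Tsc: "\<And>m c f. f \<in> D m \<Longrightarrow> T m (fscale c f) = fscale c (T m f)"
    using T_lin by (simp add: lin_on_def)
  have FV_AP: "\<And>f. f \<in> FV \<Longrightarrow> f \<in> AP" by (simp add: FV_def FV_set_def)
  have FV_D: "\<And>f m. f \<in> FV \<Longrightarrow> f \<in> D m" by (simp add: FV_def FV_set_def)
  have FV_bdd: "\<And>f j m. f \<in> FV \<Longrightarrow> bdd_above ((\<lambda>x. norm (T m f x) * \<nu> j m x) ` \<omega> m)"
    by (simp add: FV_def FV_set_def)
  have FV_I: "\<And>f. f \<in> AP \<Longrightarrow> (\<And>m. f \<in> D m) \<Longrightarrow> (\<And>j m. bdd_above ((\<lambda>x. norm (T m f x) * \<nu> j m x) ` \<omega> m)) \<Longrightarrow> f \<in> FV"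
    by (simp add: FV_def FV_set_def)
  have Pi: "\<And>j m f. P (j, m) f = (SUP x\<in>\<omega> m. norm (T m f x) * \<nu> j m x)"
    by (simp add: P_def FV_sn_def)
  have T0: "T m 0 = 0" for m
  proof -
    have z: "0 \<in> D m" using D_sub by (simp add: lsub_0)
    have "T m (fscale 0 0) = fscale 0 (T m 0)" by (rule Tsc[OF z])
    moreover have "fscale 0 (0::(real,'n) vec \<Rightarrow> 'k) = 0" by (simp add: fun_eq_iff)
    moreover have "fscale 0 (T m 0) = 0" by (simp add: fun_eq_iff)
    ultimately show ?thesis by simp
  qed
  have FVsub: "lin_subspace FV" unfolding lin_subspace_def
  proof (intro conjI ballI allI)
    show "0 \<in> FV"
    proof (rule FV_I)
      show "0 \<in> AP" using AP_sub by (simp add: lsub_0)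
      show "0 \<in> D m" for m using D_sub by (simp add: lsub_0)
      show "bdd_above ((\<lambda>x. norm (T m 0 x) * \<nu> j m x) ` \<omega> m)" for j m
        by (rule bdd_aboveI2[of _ _ 0]) (simp add: T0)
    qed
  next
    fix f g assume f: "f \<in> FV" and g: "g \<in> FV"
    show "f + g \<in> FV"
    proof (rule FV_I)
      show "f + g \<in> AP" using AP_sub FV_AP[OF f] FV_AP[OF g] by (simp add: lsub_add)
      show "f + g \<in> D m" for m using D_sub FV_D[OF f] FV_D[OF g] by (simp add: lsub_add)
      show "bdd_above ((\<lambda>x. norm (T m (f + g) x) * \<nu> j m x) ` \<omega> m)" for j m
      proof -
        have fD: "f \<in> D m" "g \<in> D m" using FV_D f g by auto
        obtain Mf where Mf: "\<forall>x\<in>\<omega> m. norm (T m f x) * \<nu> j m x \<le> Mf"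
          using FV_bdd[OF f, where j=j and m=m] unfolding bdd_above_def by auto
        obtain Mg where Mg: "\<forall>x\<in>\<omega> m. norm (T m g x) * \<nu> j m x \<le> Mg"
          using FV_bdd[OF g, where j=j and m=m] unfolding bdd_above_def by auto
        show ?thesis
        proof (rule bdd_aboveI2[of _ _ "Mf + Mg"])
          fix x assume x: "x \<in> \<omega> m"
          have "norm (T m (f + g) x) * \<nu> j m x = norm (T m f x + T m g x) * \<nu> j m x" using Tadd[OF fD] by simp
          also have "\<dots> \<le> (norm (T m f x) + norm (T m g x)) * \<nu> j m x"
            using \<nu>_nonneg by (intro mult_right_mono norm_triangle_ineq) auto
          also have "\<dots> = norm (T m f x) * \<nu> j m x + norm (T m g x) * \<nu> j m x" by (simp add: distrib_right)
          also have "\<dots> \<le> Mf + Mg" using Mf Mg x by (intro add_mono) auto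
          finally show "norm (T m (f + g) x) * \<nu> j m x \<le> Mf + Mg" .
        qed
      qed
    qed
  next
    fix c f assume f: "f \<in> FV"
    show "fscale c f \<in> FV"
    proof (rule FV_I)
      show "fscale c f \<in> AP" using AP_sub FV_AP[OF f] by (simp add: lsub_scale)
      show "fscale c f \<in> D m" for m using D_sub FV_D[OF f] by (simp add: lsub_scale)
      show "bdd_above ((\<lambda>x. norm (T m (fscale c f) x) * \<nu> j m x) ` \<omega> m)" for j m
      proof -
        have fD: "f \<in> D m" using FV_D f by auto
        obtain Mf where Mf: "\<forall>x\<in>\<omega> m. norm (T m f x) * \<nu> j m x \<le> Mf"
          using FV_bdd[OF f, where j=j and m=m] unfolding bdd_above_def by auto
        show ?thesis
        proof (rule bdd_aboveI2[of _ _ "norm c * Mf"])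
          fix x assume x: "x \<in> \<omega> m"
          have "norm (T m (fscale c f) x) * \<nu> j m x = norm c * (norm (T m f x) * \<nu> j m x)"
            using Tsc[OF fD] by (simp add: norm_mult)
          also have "\<dots> \<le> norm c * Mf" using Mf x by (intro mult_left_mono) auto
          finally show "norm (T m (fscale c f) x) * \<nu> j m x \<le> norm c * Mf" .
        qed
      qed
    qed
  qed
  have Pnn: "\<forall>i. \<forall>f\<in>FV. 0 \<le> P i f"
  proof (intro allI ballI)
    fix i :: "'j \<times> 'm" and f assume f: "f \<in> FV"
    obtain j m where i: "i = (j, m)" by (cases i)
    obtain x0 where x0: "x0 \<in> \<omega> m" using \<omega>_ne by blast
    have bdd: "bdd_above ((\<lambda>x. norm (T m f x) * \<nu> j m x) ` \<omega> m)" using FV_bdd[OF f] .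
    have "norm (T m f x0) * \<nu> j m x0 \<le> P (j, m) f" unfolding Pi by (rule cSUP_upper[OF x0 bdd])
    moreover have "0 \<le> norm (T m f x0) * \<nu> j m x0" using \<nu>_nonneg by simp
    ultimately show "0 \<le> P i f" using i by simp
  qed
  have Padd: "\<forall>i. \<forall>f\<in>FV. \<forall>g\<in>FV. P i (f + g) \<le> P i f + P i g"
  proof (intro allI ballI)
    fix i :: "'j \<times> 'm" and f g assume f: "f \<in> FV" and g: "g \<in> FV"
    obtain j m where i: "i = (j, m)" by (cases i)
    have bf: "bdd_above ((\<lambda>x. norm (T m f x) * \<nu> j m x) ` \<omega> m)" using FV_bdd[OF f] .
    have bg: "bdd_above ((\<lambda>x. norm (T m g x) * \<nu> j m x) ` \<omega> m)" using FV_bdd[OF g] .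
    have fD: "f \<in> D m" "g \<in> D m" using FV_D f g by auto
    have "P (j, m) (f + g) \<le> P (j, m) f + P (j, m) g" unfolding Pi
    proof (rule cSUP_least)
      show "\<omega> m \<noteq> {}" using \<omega>_ne by blast
      fix x assume x: "x \<in> \<omega> m"
      have "norm (T m (f + g) x) * \<nu> j m x = norm (T m f x + T m g x) * \<nu> j m x" using Tadd[OF fD] by simp
      also have "\<dots> \<le> (norm (T m f x) + norm (T m g x)) * \<nu> j m x"
        using \<nu>_nonneg by (intro mult_right_mono norm_triangle_ineq) auto
      also have "\<dots> = norm (T m f x) * \<nu> j m x + norm (T m g x) * \<nu> j m x" by (simp add: distrib_right)
      also have "\<dots> \<le> (SUP x\<in>\<omega> m. norm (T m f x) * \<nu> j m x) + (SUP x\<in>\<omega> m. norm (T m g x) * \<nu> j m x)"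
        by (intro add_mono cSUP_upper[OF x] bf bg)
      finally show "norm (T m (f + g) x) * \<nu> j m x \<le> (SUP x\<in>\<omega> m. norm (T m f x) * \<nu> j m x) + (SUP x\<in>\<omega> m. norm (T m g x) * \<nu> j m x)" .
    qed
    then show "P i (f + g) \<le> P i f + P i g" using i by simp
  qed
  have Pscale: "\<forall>i c. \<forall>f\<in>FV. P i (fscale c f) \<le> norm c * P i f"
  proof (intro allI ballI)
    fix i :: "'j \<times> 'm" and c f assume f: "f \<in> FV"
    obtain j m where i: "i = (j, m)" by (cases i)
    have bf: "bdd_above ((\<lambda>x. norm (T m f x) * \<nu> j m x) ` \<omega> m)" using FV_bdd[OF f] .
    have fD: "f \<in> D m" using FV_D f by auto
    have "P (j, m) (fscale c f) \<le> norm c * P (j, m) f" unfolding Pi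
    proof (rule cSUP_least)
      show "\<omega> m \<noteq> {}" using \<omega>_ne by blast
      fix x assume x: "x \<in> \<omega> m"
      have "norm (T m (fscale c f) x) * \<nu> j m x = norm c * (norm (T m f x) * \<nu> j m x)"
        using Tsc[OF fD] by (simp add: norm_mult)
      also have "\<dots> \<le> norm c * (SUP x\<in>\<omega> m. norm (T m f x) * \<nu> j m x)"
        by (intro mult_left_mono cSUP_upper[OF x] bf) simp
      finally show "norm (T m (fscale c f) x) * \<nu> j m x \<le> norm c * (SUP x\<in>\<omega> m. norm (T m f x) * \<nu> j m x)" .
    qed
    then show "P i (fscale c f) \<le> norm c * P i f" using i by simp
  qed
  have mc: "mctx FV P scE qE \<Omega> u"
    by (rule mctx.intro[OF bspaceE.intro[OF bspace.intro[OF FVsub Pnn Padd Pscale barrelled] bspaceE_axioms.intro[OF E_lc]]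
          mctx_axioms.intro[OF open_\<Omega> dom_delta uE]])
  interpret mc: mctx FV P scE qE \<Omega> u by (rule mc)
  have M: "Ck_enat scE qE \<Omega> k (\<lambda>x. u (ext_on FV (\<lambda>f. f x))) \<and> (\<forall>w. enat (length w) \<le> k \<longrightarrow> mc.Prop w)"
    by (rule mc.main[OF incl_welldef])
  show "Ck_enat scE qE \<Omega> k (\<lambda>x. u (ext_on FV (\<lambda>f. f x))) \<and>
     (\<forall>\<beta>. enat (sum \<beta> UNIV) \<le> k \<longrightarrow> (\<forall>x\<in>\<Omega>.
        pd_multi scE qE \<beta> (\<lambda>y. u (ext_on FV (\<lambda>f. f y))) x
          = u (ext_on FV (\<lambda>f. pd_multi (*) (\<lambda>_::unit. norm) \<beta> f x))))"
  proof (intro conjI allI impI ballI)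
    show "Ck_enat scE qE \<Omega> k (\<lambda>x. u (ext_on FV (\<lambda>f. f x)))" using M by blast
    fix \<beta> :: "'n \<Rightarrow> nat" and x assume \<beta>: "enat (sum \<beta> UNIV) \<le> k" and x: "x \<in> \<Omega>"
    define w where "w = concat (map (\<lambda>n. replicate (\<beta> n) n) (sorted_list_of_set (UNIV::'n set)))"
    have "enat (length w) \<le> k" using \<beta> word_len[of \<beta>] by (simp add: w_def)
    then have "mc.Prop w" using M by blast
    then have "foldr (pd scE qE) w (\<lambda>y. u (ext_on FV (\<lambda>f. f y))) x = u (ext_on FV (\<lambda>f. DS w f x))"
      using x unfolding mc.Prop_def by blast
    then show "pd_multi scE qE \<beta> (\<lambda>y. u (ext_on FV (\<lambda>f. f y))) x
          = u (ext_on FV (\<lambda>f. pd_multi (*) (\<lambda>_::unit. norm) \<beta> f x))"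
      by (simp only: pd_multi_word w_def)
  qed
qed

end
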